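(* Let $n\le m$ and $0<\rho<n$. Define $$\epsilon=\left\lceil\frac{(q^m-q^\rho)\left({n\brack 1}-{\rho\brack 1}\right)}{q^\rho{\rho+1\brack 1}}\right\rceil q^\rho{\rho+1\brack 1}+(q^m-q^\rho)\left({\rho\brack 1}-{n\brack 1}\right)$$ and $\delta=V_1(q^m,n)-q^{\rho-1}{\rho\brack 1}-1+2\epsilon$. If $\epsilon>0$, then $$K_{\mathrm R}(q^m,n,\rho)\ge\left\lceil\frac{q^{mn}}{V_\rho(q^m,n)-\frac{\epsilon}{\delta}N_\rho(q^m,n)}\right\rceil.$$
   Context: The rank $\mathrm{rk}(\mathbf x)$ of $\mathbf x\in\mathrm{GF}(q^m)^n$ is the maximum number of its coordinates linearly independent over $\mathrm{GF}(q)$, and $d_{\mathrm R}(\mathbf x,\mathbf y)=\mathrm{rk}(\mathbf x-\mathbf y)$. $K_{\mathrm R}(q^m,n,\rho)$ is the minimum cardinality of a code in $\mathrm{GF}(q^m)^n$ with rank covering radius $\rho$ (covering radius $=\max_{\mathbf x}\min_{\mathbf c\in C}d_{\mathrm R}(\mathbf x,\mathbf c)$). $N_u(q^m,n)={n\brack u}\alpha(m,u)$ is the number of vectors of rank $u$ in $\mathrm{GF}(q^m)^n$ and $V_r(q^m,n)=\sum_{u=0}^r N_u(q^m,n)$, where $\alpha(m,0)=1$, $\alpha(m,u)=\prod_{i=0}^{u-1}(q^m-q^i)$ and ${n\brack u}=\alpha(n,u)/\alpha(u,u)$. *)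

theory Defs
  imports Complex_Main "HOL-Library.FuncSet"
begin

text \<open>The ambient field GF(q^m) is a finite field type 'k; GF(q) is a subfield F of it.\<close>

definition is_subfield :: "'k::field set \<Rightarrow> bool" where
  "is_subfield F \<longleftrightarrow> 0 \<in> F \<and> 1 \<in> F \<and>
     (\<forall>a\<in>F. \<forall>b\<in>F. a + b \<in> F \<and> a * b \<in> F) \<and>
     (\<forall>a\<in>F. - a \<in> F) \<and> (\<forall>a\<in>F. a \<noteq> 0 \<longrightarrow> inverse a \<in> F)"

definition vecs :: "nat \<Rightarrow> (nat \<Rightarrow> 'k) set" where
  "vecs n = {..<n} \<rightarrow>\<^sub>E (UNIV :: 'k set)"

definition lin_indep_over :: "'k::field set \<Rightarrow> (nat \<Rightarrow> 'k) \<Rightarrow> nat set \<Rightarrow> bool" where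
  "lin_indep_over F x I \<longleftrightarrow>
     (\<forall>c. (\<forall>i\<in>I. c i \<in> F) \<longrightarrow> (\<Sum>i\<in>I. c i * x i) = 0 \<longrightarrow> (\<forall>i\<in>I. c i = 0))"

definition rk :: "'k::field set \<Rightarrow> nat \<Rightarrow> (nat \<Rightarrow> 'k) \<Rightarrow> nat" where
  "rk F n x = Max {card I | I. I \<subseteq> {..<n} \<and> lin_indep_over F x I}"

definition rank_dist :: "'k::field set \<Rightarrow> nat \<Rightarrow> (nat \<Rightarrow> 'k) \<Rightarrow> (nat \<Rightarrow> 'k) \<Rightarrow> nat" where
  "rank_dist F n x y = rk F n (\<lambda>i. x i - y i)"

definition rank_cov_radius :: "'k::field set \<Rightarrow> nat \<Rightarrow> (nat \<Rightarrow> 'k) set \<Rightarrow> nat" where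
  "rank_cov_radius F n C = Max {Min {rank_dist F n x c | c. c \<in> C} | x. x \<in> vecs n}"

definition K_R :: "'k::field set \<Rightarrow> nat \<Rightarrow> nat \<Rightarrow> nat" where
  "K_R F n \<rho> = (LEAST k. \<exists>C. C \<subseteq> vecs n \<and> C \<noteq> {} \<and> card C = k \<and> rank_cov_radius F n C = \<rho>)"

definition alpha :: "nat \<Rightarrow> nat \<Rightarrow> nat \<Rightarrow> nat" where
  "alpha q m u = (\<Prod>i<u. q ^ m - q ^ i)"

definition gbinom :: "nat \<Rightarrow> nat \<Rightarrow> nat \<Rightarrow> nat" where
  "gbinom q n u = alpha q n u div alpha q u u"

definition N_R :: "nat \<Rightarrow> nat \<Rightarrow> nat \<Rightarrow> nat \<Rightarrow> nat" where
  "N_R q m n u = gbinom q n u * alpha q m u"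

definition V_R :: "nat \<Rightarrow> nat \<Rightarrow> nat \<Rightarrow> nat \<Rightarrow> nat" where
  "V_R q m n r = (\<Sum>u\<le>r. N_R q m n u)"

definition eps8 :: "nat \<Rightarrow> nat \<Rightarrow> nat \<Rightarrow> nat \<Rightarrow> real" where
  "eps8 q m n \<rho> =
     real_of_int \<lceil>((real q ^ m - real q ^ \<rho>) * (real (gbinom q n 1) - real (gbinom q \<rho> 1)))
                  / (real q ^ \<rho> * real (gbinom q (\<rho> + 1) 1))\<rceil>
       * (real q ^ \<rho> * real (gbinom q (\<rho> + 1) 1))
     + (real q ^ m - real q ^ \<rho>) * (real (gbinom q \<rho> 1) - real (gbinom q n 1))"

definition delta8 :: "nat \<Rightarrow> nat \<Rightarrow> nat \<Rightarrow> nat \<Rightarrow> real" where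
  "delta8 q m n \<rho> = real (V_R q m n 1) - real q ^ (\<rho> - 1) * real (gbinom q \<rho> 1) - 1
     + 2 * eps8 q m n \<rho>"

end

theory Submission
  imports Defs
begin


locale rkf = fixes F :: "'k::{finite,field} set" assumes sf: "is_subfield F"
begin

lemma F0: "0 \<in> F" and F1: "1 \<in> F"
  and Fadd: "a \<in> F \<Longrightarrow> b \<in> F \<Longrightarrow> a + b \<in> F"
  and Fmult: "a \<in> F \<Longrightarrow> b \<in> F \<Longrightarrow> a * b \<in> F"
  and Fneg: "a \<in> F \<Longrightarrow> - a \<in> F"
  and Finv: "a \<in> F \<Longrightarrow> inverse a \<in> F"
  using sf unfolding is_subfield_def by (auto simp del: inverse_eq_divide)

lemma Fdiff: "a \<in> F \<Longrightarrow> b \<in> F \<Longrightarrow> a - b \<in> F"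
  using Fadd[of a "-b"] Fneg[of b] by simp

lemma Fdiv: "a \<in> F \<Longrightarrow> b \<in> F \<Longrightarrow> a / b \<in> F"
  using Fmult[of a "inverse b"] Finv[of b] by (simp add: divide_inverse)

lemma Fsum: "(\<And>i. i \<in> A \<Longrightarrow> f i \<in> F) \<Longrightarrow> sum f A \<in> F"
  by (induction A rule: infinite_finite_induct) (auto intro: F0 Fadd)

lemma q2: "card F \<ge> 2"
proof -
  have "{0,1} \<subseteq> F" using F0 F1 by auto
  from card_mono[OF finite this] show ?thesis by simp
qed

definition spanI :: "nat set \<Rightarrow> (nat \<Rightarrow> 'k) \<Rightarrow> 'k set" where
  "spanI A x = {s. \<exists>c. (\<forall>i\<in>A. c i \<in> F) \<and> s = (\<Sum>i\<in>A. c i * x i)}"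

definition subsp :: "'k set \<Rightarrow> bool" where
  "subsp S \<longleftrightarrow> 0 \<in> S \<and> (\<forall>a\<in>S. \<forall>b\<in>S. a + b \<in> S) \<and> (\<forall>t\<in>F. \<forall>a\<in>S. t * a \<in> S)"

lemma subsp_neg: "subsp S \<Longrightarrow> a \<in> S \<Longrightarrow> - a \<in> S"
  using Fneg[OF F1] unfolding subsp_def by (metis mult_minus1)

lemma subsp_diff: "subsp S \<Longrightarrow> a \<in> S \<Longrightarrow> b \<in> S \<Longrightarrow> a - b \<in> S"
  using subsp_neg[of S b] unfolding subsp_def by (metis diff_conv_add_uminus)

lemma subsp_sum: "subsp S \<Longrightarrow> (\<And>i. i \<in> A \<Longrightarrow> x i \<in> S) \<Longrightarrow> (\<And>i. i \<in> A \<Longrightarrow> c i \<in> F)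
   \<Longrightarrow> (\<Sum>i\<in>A. c i * x i) \<in> S"
  by (induction A rule: infinite_finite_induct) (auto simp: subsp_def)

lemma spanI_sub: "subsp S \<Longrightarrow> (\<And>i. i \<in> A \<Longrightarrow> x i \<in> S) \<Longrightarrow> spanI A x \<subseteq> S"
  unfolding spanI_def using subsp_sum by blast

lemma subsp_spanI: "subsp (spanI A x)"
  unfolding subsp_def spanI_def
proof (intro conjI ballI)
  show "0 \<in> {s. \<exists>c. (\<forall>i\<in>A. c i \<in> F) \<and> s = (\<Sum>i\<in>A. c i * x i)}"
    by (rule CollectI, rule exI[of _ "\<lambda>_. 0"]) (simp add: F0)
next
  fix a b assume "a \<in> {s. \<exists>c. (\<forall>i\<in>A. c i \<in> F) \<and> s = (\<Sum>i\<in>A. c i * x i)}"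
     "b \<in> {s. \<exists>c. (\<forall>i\<in>A. c i \<in> F) \<and> s = (\<Sum>i\<in>A. c i * x i)}"
  then obtain c d where "\<forall>i\<in>A. c i \<in> F" "a = (\<Sum>i\<in>A. c i * x i)" "\<forall>i\<in>A. d i \<in> F" "b = (\<Sum>i\<in>A. d i * x i)" by auto
  then show "a + b \<in> {s. \<exists>c. (\<forall>i\<in>A. c i \<in> F) \<and> s = (\<Sum>i\<in>A. c i * x i)}"
    by (intro CollectI exI[of _ "\<lambda>i. c i + d i"]) (auto simp: Fadd sum.distrib distrib_right)
next
  fix t a assume "t \<in> F" "a \<in> {s. \<exists>c. (\<forall>i\<in>A. c i \<in> F) \<and> s = (\<Sum>i\<in>A. c i * x i)}"
  then obtain c where "\<forall>i\<in>A. c i \<in> F" "a = (\<Sum>i\<in>A. c i * x i)" by auto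
  then show "t * a \<in> {s. \<exists>c. (\<forall>i\<in>A. c i \<in> F) \<and> s = (\<Sum>i\<in>A. c i * x i)}"
    using \<open>t \<in> F\<close> by (intro CollectI exI[of _ "\<lambda>i. t * c i"]) (auto simp: Fmult sum_distrib_left mult.assoc)
qed

lemma spanI_mem: "finite A \<Longrightarrow> j \<in> A \<Longrightarrow> x j \<in> spanI A x"
  unfolding spanI_def
proof (intro CollectI exI[of _ "\<lambda>i. if i = j then 1 else 0"] conjI)
  show "\<forall>i\<in>A. (if i = j then 1 else 0) \<in> F" using F0 F1 by auto
  assume "finite A" "j \<in> A"
  have "(\<Sum>i\<in>A. (if i = j then 1 else 0) * x i) = (\<Sum>i\<in>A. if i = j then x i else 0)"
    by (rule sum.cong) auto
  also have "\<dots> = x j" using \<open>finite A\<close> \<open>j \<in> A\<close> by simp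
  finally show "x j = (\<Sum>i\<in>A. (if i = j then 1 else 0) * x i)" by simp
qed

lemma spanI_memI: "(\<And>i. i \<in> A \<Longrightarrow> c i \<in> F) \<Longrightarrow> (\<Sum>i\<in>A. c i * x i) \<in> spanI A x"
  unfolding spanI_def by blast

lemma spanI_cong: "(\<And>i. i \<in> A \<Longrightarrow> x i = y i) \<Longrightarrow> spanI A x = spanI A y"
  unfolding spanI_def by (metis (no_types, lifting) sum.cong)

lemma spanI_image: "spanI A x = (\<lambda>c. \<Sum>i\<in>A. c i * x i) ` (A \<rightarrow>\<^sub>E F)"
proof
  show "spanI A x \<subseteq> (\<lambda>c. \<Sum>i\<in>A. c i * x i) ` (A \<rightarrow>\<^sub>E F)"
  proof
    fix s assume "s \<in> spanI A x"
    then obtain c where c: "\<forall>i\<in>A. c i \<in> F" "s = (\<Sum>i\<in>A. c i * x i)" unfolding spanI_def by auto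
    then have "s = (\<Sum>i\<in>A. restrict c A i * x i)" by simp
    moreover have "restrict c A \<in> A \<rightarrow>\<^sub>E F" using c by auto
    ultimately show "s \<in> (\<lambda>c. \<Sum>i\<in>A. c i * x i) ` (A \<rightarrow>\<^sub>E F)" by blast
  qed
next
  show "(\<lambda>c. \<Sum>i\<in>A. c i * x i) ` (A \<rightarrow>\<^sub>E F) \<subseteq> spanI A x"
    unfolding spanI_def by (auto simp: PiE_iff)
qed

lemma card_PiE_F: "finite A \<Longrightarrow> card (A \<rightarrow>\<^sub>E F) = card F ^ card A"
  by (simp add: card_PiE)

lemma card_spanI_le: "finite A \<Longrightarrow> card (spanI A x) \<le> card F ^ card A"
  using card_image_le[of "A \<rightarrow>\<^sub>E F" "\<lambda>c. \<Sum>i\<in>A. c i * x i"] card_PiE_F[of A]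
  by (simp add: spanI_image finite_PiE)

lemma card_spanI_indep:
  assumes "finite A" "lin_indep_over F x A"
  shows "card (spanI A x) = card F ^ card A"
proof -
  have "inj_on (\<lambda>c. \<Sum>i\<in>A. c i * x i) (A \<rightarrow>\<^sub>E F)"
  proof (rule inj_onI)
    fix c d assume c: "c \<in> A \<rightarrow>\<^sub>E F" and d: "d \<in> A \<rightarrow>\<^sub>E F"
      and eq: "(\<Sum>i\<in>A. c i * x i) = (\<Sum>i\<in>A. d i * x i)"
    have "(\<Sum>i\<in>A. (c i - d i) * x i) = 0" using eq by (simp add: left_diff_distrib sum_subtractf)
    moreover have "\<forall>i\<in>A. c i - d i \<in> F" using c d by (auto intro: Fdiff)
    ultimately have "\<forall>i\<in>A. c i - d i = 0" using assms(2) unfolding lin_indep_over_def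
      by (rule_tac allE[where x="\<lambda>i. c i - d i"]) auto
    then show "c = d" using c d by (intro PiE_ext[OF c d]) auto
  qed
  from card_image[OF this] show ?thesis using card_PiE_F[OF assms(1)] by (simp add: spanI_image)
qed

lemma ext_set_card:
  assumes "subsp S" "l \<notin> S"
  shows "card {s + t * l | s t. s \<in> S \<and> t \<in> F} = card S * card F"
proof -
  have "{s + t * l | s t. s \<in> S \<and> t \<in> F} = (\<lambda>(s,t). s + t * l) ` (S \<times> F)" by auto
  moreover have "inj_on (\<lambda>(s,t). s + t * l) (S \<times> F)"
  proof (rule inj_onI, clarsimp)
    fix s t s' t' assume h: "s \<in> S" "t \<in> F" "s' \<in> S" "t' \<in> F" "s + t * l = s' + t' * l"
    show "s = s' \<and> t = t'"
    proof (cases "t = t'")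
      case True then show ?thesis using h by simp
    next
      case False
      have "(t - t') * l = s' - s" using h(5) by (simp add: algebra_simps)
      then have "l = (1 / (t - t')) * (s' - s)" using False by (simp add: field_simps)
      moreover have "1 / (t - t') \<in> F" using h by (intro Fdiv F1 Fdiff)
      ultimately have "l \<in> S" using subsp_diff[OF assms(1) h(3) h(1)] assms(1) unfolding subsp_def by metis
      then show ?thesis using assms by simp
    qed
  qed
  ultimately show ?thesis by (simp add: card_image card_cartesian_product)
qed

lemma ext_set_in:
  assumes "subsp S" "l \<in> S"
  shows "{s + t * l | s t. s \<in> S \<and> t \<in> F} = S"
proof
  show "{s + t * l | s t. s \<in> S \<and> t \<in> F} \<subseteq> S" using assms unfolding subsp_def by auto
  show "S \<subseteq> {s + t * l | s t. s \<in> S \<and> t \<in> F}"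
  proof
    fix x assume "x \<in> S"
    then have "x = x + 0 * l \<and> x \<in> S \<and> 0 \<in> F" using F0 by simp
    then show "x \<in> {s + t * l | s t. s \<in> S \<and> t \<in> F}" by blast
  qed
qed

end



context rkf begin

abbreviation spn :: "nat \<Rightarrow> (nat \<Rightarrow> 'k) \<Rightarrow> 'k set" where
  "spn n x \<equiv> spanI {..<n} x"

lemma rk_set_fin: "finite {card I | I. I \<subseteq> {..<n} \<and> lin_indep_over F x I}"
proof -
  have "{card I | I. I \<subseteq> {..<n} \<and> lin_indep_over F x I} \<subseteq> {..n}"
    using card_mono[of "{..<n}"] by fastforce
  then show ?thesis using finite_subset by blast
qed

lemma indep_empty: "lin_indep_over F x {}"
  unfolding lin_indep_over_def by simp

lemma rk_obtain: "\<exists>I. I \<subseteq> {..<n} \<and> lin_indep_over F x I \<and> card I = rk F n x"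
proof -
  have "{card I | I. I \<subseteq> {..<n} \<and> lin_indep_over F x I} \<noteq> {}" using indep_empty by blast
  from Max_in[OF rk_set_fin this] show ?thesis unfolding rk_def by auto
qed

lemma rk_ge: "I \<subseteq> {..<n} \<Longrightarrow> lin_indep_over F x I \<Longrightarrow> card I \<le> rk F n x"
  unfolding rk_def by (rule Max_ge[OF rk_set_fin]) blast

lemma indepD: "lin_indep_over F x I \<Longrightarrow> \<forall>i\<in>I. c i \<in> F \<Longrightarrow> (\<Sum>i\<in>I. c i * x i) = 0 \<Longrightarrow> i \<in> I \<Longrightarrow> c i = 0"
  unfolding lin_indep_over_def by blast

lemma max_spans:
  assumes I: "I \<subseteq> {..<n}" "lin_indep_over F x I" "card I = rk F n x"
  shows "spanI I x = spn n x"
proof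
  have fI: "finite I" using I(1) finite_subset by blast
  show "spanI I x \<subseteq> spn n x"
    by (rule spanI_sub[OF subsp_spanI]) (use I(1) in \<open>auto intro: spanI_mem\<close>)
  show "spn n x \<subseteq> spanI I x"
  proof (rule spanI_sub[OF subsp_spanI])
    fix j assume j: "j \<in> {..<n}"
    show "x j \<in> spanI I x"
    proof (cases "j \<in> I")
      case True then show ?thesis using fI spanI_mem by blast
    next
      case False
      have "card (insert j I) = rk F n x + 1" using False fI I(3) by simp
      then have "\<not> lin_indep_over F x (insert j I)"
        using rk_ge[of "insert j I" n x] I(1) j by auto
      then obtain c where c: "\<forall>i\<in>insert j I. c i \<in> F" "(\<Sum>i\<in>insert j I. c i * x i) = 0"
          "\<exists>i\<in>insert j I. c i \<noteq> 0"
        unfolding lin_indep_over_def by blast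
      have sum: "c j * x j + (\<Sum>i\<in>I. c i * x i) = 0" using c(2) False fI by simp
      have cj: "c j \<noteq> 0"
      proof
        assume "c j = 0"
        then have "(\<Sum>i\<in>I. c i * x i) = 0" using sum by simp
        then have "\<forall>i\<in>I. c i = 0" using indepD[OF I(2)] c(1) by blast
        then show False using c(3) \<open>c j = 0\<close> by auto
      qed
      have "x j = (\<Sum>i\<in>I. (- c i / c j) * x i)"
      proof -
        have "(\<Sum>i\<in>I. (- c i / c j) * x i) = - (\<Sum>i\<in>I. c i * x i) / c j"
          by (simp add: sum_divide_distrib sum_negf[symmetric])
        also have "\<dots> = x j"
        proof -
          have "(\<Sum>i\<in>I. c i * x i) = - (c j * x j)" using sum by (simp add: eq_neg_iff_add_eq_0 add.commute)
          then show ?thesis using cj by simp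
        qed
        finally show ?thesis by simp
      qed
      moreover have "\<forall>i\<in>I. - c i / c j \<in> F" using c(1) by (auto intro!: Fdiv Fneg)
      ultimately show ?thesis using spanI_memI[of I "\<lambda>i. - c i / c j" x] by simp
    qed
  qed
qed

abbreviation q where "q \<equiv> card F"

lemma card_spn: "card (spn n x) = q ^ rk F n x"
proof -
  obtain I where I: "I \<subseteq> {..<n}" "lin_indep_over F x I" "card I = rk F n x" using rk_obtain by blast
  then have "finite I" using finite_subset by blast
  then show ?thesis using card_spanI_indep[OF _ I(2)] max_spans[OF I] I(3) by simp
qed

lemma rk_eq_iff: "rk F n x = r \<longleftrightarrow> card (spn n x) = q ^ r"
  using card_spn q2 by (simp add: power_inject_exp)

lemma rk_le_iff: "rk F n x \<le> r \<longleftrightarrow> card (spn n x) \<le> q ^ r"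
  using card_spn q2 by (simp add: power_increasing_iff)

lemma rk_less_iff: "rk F n x < r \<longleftrightarrow> card (spn n x) < q ^ r"
  using card_spn q2 by (simp add: power_strict_increasing_iff)

lemma rk_spn_eq: "spn n x = spn n y \<Longrightarrow> rk F n x = rk F n y"
  using card_spn[of n x] card_spn[of n y] q2 by (simp add: power_inject_exp)

lemma rk_cong: "(\<And>i. i < n \<Longrightarrow> x i = y i) \<Longrightarrow> rk F n x = rk F n y"
  by (rule rk_spn_eq, rule spanI_cong) auto

lemma spn_plus: "spn n (\<lambda>i. x i + y i) \<subseteq> (\<lambda>(a,b). a + b) ` (spn n x \<times> spn n y)"
proof
  fix s assume "s \<in> spn n (\<lambda>i. x i + y i)"
  then obtain c where c: "\<forall>i\<in>{..<n}. c i \<in> F" "s = (\<Sum>i<n. c i * (x i + y i))"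
    unfolding spanI_def by blast
  then have "s = (\<Sum>i<n. c i * x i) + (\<Sum>i<n. c i * y i)" by (simp add: distrib_left sum.distrib)
  moreover have "(\<Sum>i<n. c i * x i) \<in> spn n x" "(\<Sum>i<n. c i * y i) \<in> spn n y"
    using c(1) by (auto intro: spanI_memI)
  ultimately show "s \<in> (\<lambda>(a,b). a + b) ` (spn n x \<times> spn n y)" by force
qed

lemma rk_add: "rk F n (\<lambda>i. x i + y i) \<le> rk F n x + rk F n y"
proof -
  have "card (spn n (\<lambda>i. x i + y i)) \<le> card ((\<lambda>(a,b). a + b) ` (spn n x \<times> spn n y))"
    by (rule card_mono[OF _ spn_plus]) simp
  also have "\<dots> \<le> card (spn n x \<times> spn n y)" by (rule card_image_le) simp
  also have "\<dots> = q ^ (rk F n x + rk F n y)" by (simp add: card_cartesian_product card_spn power_add)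
  finally show ?thesis using rk_le_iff by blast
qed

lemma spn_neg: "spn n (\<lambda>i. - x i) = spn n x"
proof -
  have "\<And>x. spn n (\<lambda>i. - x i) \<subseteq> spn n x"
  proof
    fix x s assume "s \<in> spn n (\<lambda>i. - x i)"
    then obtain c where c: "\<forall>i\<in>{..<n}. c i \<in> F" "s = (\<Sum>i<n. c i * (- x i))" unfolding spanI_def by blast
    then have "s = (\<Sum>i<n. (- c i) * x i)" by simp
    moreover have "(\<Sum>i<n. (- c i) * x i) \<in> spn n x" using c(1) Fneg by (intro spanI_memI) auto
    ultimately show "s \<in> spn n x" by simp
  qed
  from this[of x] this[of "\<lambda>i. - x i"] show ?thesis by auto
qed

lemma rk_neg: "rk F n (\<lambda>i. - x i) = rk F n x"
  by (rule rk_spn_eq[OF spn_neg])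

lemma spn_zero: "(\<And>i. i < n \<Longrightarrow> x i = 0) \<Longrightarrow> spn n x = {0}"
proof -
  assume h: "\<And>i. i < n \<Longrightarrow> x i = 0"
  have "spn n x = spn n (\<lambda>_. 0)" by (rule spanI_cong) (simp add: h)
  also have "\<dots> = {0}" unfolding spanI_def using F0 by auto
  finally show ?thesis .
qed

lemma rk_zero_iff: "rk F n x = 0 \<longleftrightarrow> (\<forall>i<n. x i = 0)"
proof
  assume "rk F n x = 0"
  then have c1: "card (spn n x) = 1" using card_spn by simp
  have "0 \<in> spn n x" using subsp_spanI unfolding subsp_def by blast
  obtain a where "spn n x = {a}" using c1 card_1_singletonE by blast
  then have "spn n x = {0}" using \<open>0 \<in> spn n x\<close> by simp
  then show "\<forall>i<n. x i = 0" using spanI_mem[of "{..<n}" _ x] by auto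
next
  assume "\<forall>i<n. x i = 0"
  then show "rk F n x = 0" using rk_eq_iff spn_zero by simp
qed

lemma rk_le_n: "rk F n x \<le> n"
proof -
  obtain I where "I \<subseteq> {..<n}" "card I = rk F n x" using rk_obtain by blast
  then show ?thesis using card_mono[of "{..<n}" I] by simp
qed

abbreviation dd where "dd n x y \<equiv> rk F n (\<lambda>i. x i - y i)"

lemma dd_tri: "dd n x z \<le> dd n x y + dd n y z"
proof -
  have "dd n x z = rk F n (\<lambda>i. (x i - y i) + (y i - z i))" by simp
  then show ?thesis using rk_add[of n "\<lambda>i. x i - y i" "\<lambda>i. y i - z i"] by simp
qed

lemma dd_sym: "dd n x y = dd n y x"
  using rk_neg[of n "\<lambda>i. y i - x i"] by simp

lemma dd_self: "dd n x x = 0"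
  using rk_zero_iff by simp

end



fun G :: "nat \<Rightarrow> nat \<Rightarrow> nat \<Rightarrow> nat" where
  "G q n 0 = 1"
| "G q 0 (Suc u) = 0"
| "G q (Suc n) (Suc u) = q ^ Suc u * G q n (Suc u) + G q n u"

lemma alpha_Suc: "alpha q n (Suc u) = alpha q n u * (q ^ n - q ^ u)"
  unfolding alpha_def by simp

lemma alpha_Suc_Suc: "alpha q (Suc n) (Suc u) = (q ^ Suc n - 1) * q ^ u * alpha q n u"
proof -
  have "alpha q (Suc n) (Suc u) = (q ^ Suc n - q ^ 0) * (\<Prod>i<u. q ^ Suc n - q ^ Suc i)"
    unfolding alpha_def by (rule prod.lessThan_Suc_shift)
  also have "(\<Prod>i<u. q ^ Suc n - q ^ Suc i) = (\<Prod>i<u. q * (q ^ n - q ^ i))"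
    by (simp add: right_diff_distrib')
  also have "\<dots> = q ^ u * alpha q n u" unfolding alpha_def by (simp add: prod.distrib)
  finally show ?thesis by simp
qed

lemma alpha_zero: "n < u \<Longrightarrow> alpha q n u = 0"
  unfolding alpha_def by (rule prod_zero) auto

lemma G_alpha: "q \<ge> 1 \<Longrightarrow> G q n u * alpha q u u = alpha q n u"
proof (induction n arbitrary: u)
  case 0
  then show ?case by (cases u) (auto simp: alpha_def prod_zero)
next
  case (Suc n)
  show ?case
  proof (cases u)
    case 0 then show ?thesis by (simp add: alpha_def)
  next
    case (Suc w)
    have "G q (Suc n) (Suc w) * alpha q (Suc w) (Suc w)
        = q ^ Suc w * (G q n (Suc w) * alpha q (Suc w) (Suc w)) + (G q n w * alpha q w w) * ((q ^ Suc w - 1) * q ^ w)"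
      by (simp add: alpha_Suc_Suc[of q w w] distrib_right distrib_left mult_ac)
    also have "\<dots> = q ^ Suc w * alpha q n (Suc w) + alpha q n w * ((q ^ Suc w - 1) * q ^ w)"
      using Suc.IH Suc.prems by simp
    also have "\<dots> = alpha q n w * q ^ w * (q * (q ^ n - q ^ w) + (q ^ Suc w - 1))"
      by (simp add: alpha_Suc distrib_left mult_ac)
    also have "\<dots> = alpha q (Suc n) (Suc w)"
    proof (cases "w \<le> n")
      case True
      have "q ^ w \<le> q ^ n" using True Suc.prems by (simp add: power_increasing)
      moreover have "1 \<le> q ^ Suc w" using Suc.prems by simp
      have e1: "q * (q ^ n - q ^ w) = q ^ Suc n - q ^ Suc w" by (simp add: right_diff_distrib')
      have e2: "q ^ Suc w \<le> q ^ Suc n" using True Suc.prems by (simp add: power_increasing)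
      have "q * (q ^ n - q ^ w) + (q ^ Suc w - 1) = q ^ Suc n - 1"
        unfolding e1 using e2 \<open>1 \<le> q ^ Suc w\<close> by linarith
      then show ?thesis by (simp add: alpha_Suc_Suc)
    next
      case False
      then show ?thesis by (simp add: alpha_zero alpha_Suc_Suc)
    qed
    finally show ?thesis using Suc by simp
  qed
qed

lemma alpha_pos: "q \<ge> 2 \<Longrightarrow> alpha q u u > 0"
  unfolding alpha_def by (rule prod_pos) (auto simp: power_strict_increasing)

lemma gbinom_G: "q \<ge> 2 \<Longrightarrow> gbinom q n u = G q n u"
proof -
  assume q: "q \<ge> 2"
  have "alpha q n u div alpha q u u = G q n u * alpha q u u div alpha q u u" using G_alpha[of q n u] q by simp
  also have "\<dots> = G q n u" using alpha_pos[OF q, of u] by simp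
  finally show ?thesis unfolding gbinom_def .
qed

lemma G_1: "G q n 1 * (q - 1) = q ^ n - 1"
proof (induction n)
  case 0 then show ?case by simp
next
  case (Suc n)
  have "G q (Suc n) 1 * (q - 1) = q * (G q n 1 * (q - 1)) + (q - 1)"
    by (simp add: algebra_simps)
  also have "\<dots> = q * (q ^ n - 1) + (q - 1)" using Suc by simp
  also have "\<dots> = q ^ Suc n - 1"
  proof (cases "q = 0")
    case True then show ?thesis by simp
  next
    case False
    have e1: "q * (q ^ n - 1) = q ^ Suc n - q" by (simp add: right_diff_distrib')
    have "q \<le> q ^ Suc n" using False by (simp add: Suc_leI)
    then show ?thesis unfolding e1 using False by linarith
  qed
  finally show ?case .
qed

context rkf begin

lemma spn_Suc: "spn (Suc n) x = {s + t * x n | s t. s \<in> spn n x \<and> t \<in> F}"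
proof
  show "spn (Suc n) x \<subseteq> {s + t * x n | s t. s \<in> spn n x \<and> t \<in> F}"
  proof
    fix y assume "y \<in> spn (Suc n) x"
    then obtain c where c: "\<forall>i\<in>{..<Suc n}. c i \<in> F" "y = (\<Sum>i<Suc n. c i * x i)" unfolding spanI_def by blast
    then have "y = (\<Sum>i<n. c i * x i) + c n * x n" by simp
    moreover have "(\<Sum>i<n. c i * x i) \<in> spn n x" using c(1) by (intro spanI_memI) auto
    moreover have "c n \<in> F" using c(1) by auto
    ultimately show "y \<in> {s + t * x n | s t. s \<in> spn n x \<and> t \<in> F}" by blast
  qed
next
  show "{s + t * x n | s t. s \<in> spn n x \<and> t \<in> F} \<subseteq> spn (Suc n) x"
  proof clarify
    fix s t assume s: "s \<in> spn n x" and t: "t \<in> F"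
    have "spn n x \<subseteq> spn (Suc n) x" by (rule spanI_sub[OF subsp_spanI]) (auto intro: spanI_mem)
    moreover have "x n \<in> spn (Suc n) x" by (rule spanI_mem) auto
    ultimately show "s + t * x n \<in> spn (Suc n) x" using s t subsp_spanI[of "{..<Suc n}" x]
      unfolding subsp_def by blast
  qed
qed

lemma rk_Suc: "rk F (Suc n) x = (if x n \<in> spn n x then rk F n x else Suc (rk F n x))"
proof (cases "x n \<in> spn n x")
  case True
  then have "spn (Suc n) x = spn n x" using spn_Suc ext_set_in[OF subsp_spanI] by simp
  then show ?thesis using True card_spn[of "Suc n" x] card_spn[of n x] q2 by (simp add: power_inject_exp)
next
  case False
  then have "card (spn (Suc n) x) = card (spn n x) * q"
    using spn_Suc ext_set_card[OF subsp_spanI] by simp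
  then show ?thesis using False card_spn rk_eq_iff by simp
qed

lemma finite_vecs: "finite (vecs n :: (nat \<Rightarrow> 'k) set)"
  unfolding vecs_def by (rule finite_PiE) auto

lemma card_vecs: "card (vecs n :: (nat \<Rightarrow> 'k) set) = card (UNIV :: 'k set) ^ n"
  unfolding vecs_def by (simp add: card_PiE)

lemma vecs_Suc_card:
  "card {x \<in> (vecs (Suc n) :: (nat \<Rightarrow> 'k) set). P x} = (\<Sum>y\<in>vecs n. card {t. P (y(n := t))})"
proof -
  have "{x \<in> vecs (Suc n). P x} = (\<lambda>(y,t). y(n := t)) ` (SIGMA y:vecs n. {t. P (y(n := t))})"
  proof
    show "{x \<in> vecs (Suc n). P x} \<subseteq> (\<lambda>(y,t). y(n := t)) ` (SIGMA y:vecs n. {t. P (y(n := t))})"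
    proof clarify
      fix x assume x: "x \<in> vecs (Suc n)" "P x"
      have xeq: "x = (restrict x {..<n})(n := x n)"
      proof (rule ext)
        fix i
        have "i \<notin> {..<Suc n} \<Longrightarrow> x i = undefined" using x(1) unfolding vecs_def by (rule PiE_arb)
        then show "x i = ((restrict x {..<n})(n := x n)) i" by (cases "i < n"; cases "i = n") auto
      qed
      moreover have "restrict x {..<n} \<in> vecs n" unfolding vecs_def by simp
      moreover have "P ((restrict x {..<n})(n := x n))" by (subst xeq[symmetric]) (rule x(2))
      ultimately have "(restrict x {..<n}, x n) \<in> (SIGMA y:vecs n. {t. P (y(n := t))})"
        by blast
      then show "x \<in> (\<lambda>(y,t). y(n := t)) ` (SIGMA y:vecs n. {t. P (y(n := t))})"
        by (rule image_eqI[rotated]) (simp add: xeq[symmetric])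
    qed
    show "(\<lambda>(y,t). y(n := t)) ` (SIGMA y:vecs n. {t. P (y(n := t))}) \<subseteq> {x \<in> vecs (Suc n). P x}"
    proof clarsimp
      fix y t assume "y \<in> vecs n"
      then have "\<forall>i. i \<notin> {..<n} \<longrightarrow> y i = undefined" unfolding vecs_def PiE_iff extensional_def by blast
      then show "y(n := t) \<in> vecs (Suc n)" unfolding vecs_def PiE_iff extensional_def by auto
    qed
  qed
  moreover have inj: "inj_on (\<lambda>(y,t). y(n := t)) (SIGMA y:vecs n. {t. P (y(n := t))})"
  proof (rule inj_onI, clarsimp)
    fix y t y' t' assume h: "y \<in> vecs n" "y' \<in> vecs n" "y(n := t) = y'(n := t')"
    have "y n = undefined" using h(1) unfolding vecs_def by (rule PiE_arb) simp
    moreover have "y' n = undefined" using h(2) unfolding vecs_def by (rule PiE_arb) simp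
    ultimately have "y n = y' n" by simp
    have "y = y'"
    proof (rule ext)
      fix i show "y i = y' i" using fun_cong[OF h(3), of i] \<open>y n = y' n\<close> by (cases "i = n") auto
    qed
    moreover have "t = t'" using fun_cong[OF h(3), of n] by simp
    ultimately show "y = y' \<and> t = t'" by simp
  qed
  ultimately have "card {x \<in> vecs (Suc n). P x} = card (SIGMA y:vecs n. {t. P (y(n := t))})"
    using card_image[OF inj] by simp
  also have "\<dots> = (\<Sum>y\<in>vecs n. card {t. P (y(n := t))})"
    by (rule card_SigmaI) (simp_all add: finite_vecs)
  finally show ?thesis .
qed

lemma N_count:
  assumes Q: "card (UNIV :: 'k set) = q ^ m"
  shows "card {x \<in> (vecs n :: (nat \<Rightarrow> 'k) set). rk F n x = u} = G q n u * alpha q m u"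
proof (induction n arbitrary: u)
  case 0
  have "vecs 0 = {(\<lambda>_. undefined) :: nat \<Rightarrow> 'k}" unfolding vecs_def by auto
  moreover have "rk F 0 x = 0" for x using rk_le_n[of 0 x] by simp
  ultimately show ?case by (cases u) (auto simp: alpha_def)
next
  case (Suc n)
  have spn_upd: "spn n (y(n := t)) = spn n y" for y :: "nat \<Rightarrow> 'k" and t by (rule spanI_cong) auto
  have rkupd: "rk F n (y(n := t)) = rk F n y" for y :: "nat \<Rightarrow> 'k" and t by (rule rk_cong) auto
  have fin: "finite (spn n y)" for y by simp
  have ct: "card {t. rk F (Suc n) (y(n := t)) = u} =
      (if rk F n y = u then q ^ u else 0) + (if Suc (rk F n y) = u then q ^ m - q ^ rk F n y else 0)"
    for y :: "nat \<Rightarrow> 'k"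
  proof -
    have "{t. rk F (Suc n) (y(n := t)) = u} =
        {t. t \<in> spn n y \<and> rk F n y = u} \<union> {t. t \<notin> spn n y \<and> Suc (rk F n y) = u}"
      using rk_Suc[of n "y(n := _)"] spn_upd rkupd by auto
    moreover have "card {t. t \<in> spn n y \<and> rk F n y = u} = (if rk F n y = u then q ^ u else 0)"
      using card_spn[of n y] by auto
    moreover have "card {t. t \<notin> spn n y \<and> Suc (rk F n y) = u} = (if Suc (rk F n y) = u then q ^ m - q ^ rk F n y else 0)"
    proof -
      have "card (UNIV - spn n y) = q ^ m - q ^ rk F n y"
        using card_Diff_subset[of "spn n y" UNIV] Q card_spn[of n y] by simp
      moreover have "{t. t \<notin> spn n y} = UNIV - spn n y" by auto
      ultimately show ?thesis by auto
    qed
    moreover have "finite {t. t \<in> spn n y \<and> rk F n y = u}" "finite {t. t \<notin> spn n y \<and> Suc (rk F n y) = u}" by simp_all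
    moreover have "{t. t \<in> spn n y \<and> rk F n y = u} \<inter> {t. t \<notin> spn n y \<and> Suc (rk F n y) = u} = {}" by auto
    ultimately show ?thesis by (simp only: card_Un_disjoint)
  qed
  have "card {x \<in> vecs (Suc n). rk F (Suc n) x = u} = (\<Sum>y\<in>vecs n. card {t. rk F (Suc n) (y(n := t)) = u})"
    by (rule vecs_Suc_card)
  also have "\<dots> = (\<Sum>y\<in>vecs n. (if rk F n y = u then q ^ u else 0)) + (\<Sum>y\<in>vecs n. (if Suc (rk F n y) = u then q ^ m - q ^ rk F n y else 0))"
    by (simp add: ct sum.distrib)
  also have "(\<Sum>y\<in>vecs n. (if rk F n y = u then q ^ u else 0)) = q ^ u * card {x \<in> vecs n. rk F n x = u}"
    by (simp add: sum.If_cases finite_vecs Int_def)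
  also have "(\<Sum>y\<in>vecs n. (if Suc (rk F n y) = u then q ^ m - q ^ rk F n y else 0)) =
     (case u of 0 \<Rightarrow> 0 | Suc w \<Rightarrow> (q ^ m - q ^ w) * card {x \<in> vecs n. rk F n x = w})"
  proof (cases u)
    case 0 then show ?thesis by simp
  next
    case (Suc w)
    have "(\<Sum>y\<in>vecs n. (if Suc (rk F n y) = u then q ^ m - q ^ rk F n y else 0)) =
          (\<Sum>y\<in>vecs n. (if rk F n y = w then q ^ m - q ^ w else 0))"
      using Suc by (intro sum.cong) auto
    also have "\<dots> = (q ^ m - q ^ w) * card {x \<in> vecs n. rk F n x = w}"
      by (simp add: sum.If_cases finite_vecs Int_def)
    finally show ?thesis using Suc by simp
  qed
  finally have h: "card {x \<in> vecs (Suc n). rk F (Suc n) x = u} =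
      q ^ u * card {x \<in> vecs n. rk F n x = u} + (case u of 0 \<Rightarrow> 0 | Suc w \<Rightarrow> (q ^ m - q ^ w) * card {x \<in> vecs n. rk F n x = w})" .
  show ?case
  proof (cases u)
    case 0
    then show ?thesis using h Suc.IH[of 0] by simp
  next
    case (Suc w)
    show ?thesis using h Suc.IH[of u] Suc.IH[of w] Suc by (simp add: alpha_Suc distrib_left distrib_right mult_ac)
  qed
qed

end



context rkf begin

definition Fvec :: "nat \<Rightarrow> (nat \<Rightarrow> 'k) set" where
  "Fvec n = {..<n} \<rightarrow>\<^sub>E F"

definition Kp :: "nat \<Rightarrow> (nat \<Rightarrow> 'k) \<Rightarrow> (nat \<Rightarrow> 'k) set" where
  "Kp n z = {v \<in> Fvec n. \<forall>c. (\<forall>i<n. c i \<in> F) \<longrightarrow> (\<Sum>i<n. c i * z i) = 0 \<longrightarrow> (\<Sum>i<n. c i * v i) = 0}"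

definition cof :: "nat \<Rightarrow> (nat \<Rightarrow> 'k) \<Rightarrow> 'k \<Rightarrow> nat \<Rightarrow> 'k" where
  "cof n z s = (SOME c. (\<forall>i<n. c i \<in> F) \<and> s = (\<Sum>i<n. c i * z i))"

definition ell :: "nat \<Rightarrow> (nat \<Rightarrow> 'k) \<Rightarrow> (nat \<Rightarrow> 'k) \<Rightarrow> 'k \<Rightarrow> 'k" where
  "ell n z v s = (\<Sum>i<n. cof n z s i * v i)"

lemma Fvec_F: "v \<in> Fvec n \<Longrightarrow> i < n \<Longrightarrow> v i \<in> F"
  unfolding Fvec_def by auto

lemma cof_props: assumes "s \<in> spn n z"
  shows "\<forall>i<n. cof n z s i \<in> F" "s = (\<Sum>i<n. cof n z s i * z i)"
proof -
  have "\<exists>c. (\<forall>i<n. c i \<in> F) \<and> s = (\<Sum>i<n. c i * z i)" using assms unfolding spanI_def by auto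
  from someI_ex[OF this] show "\<forall>i<n. cof n z s i \<in> F" "s = (\<Sum>i<n. cof n z s i * z i)"
    unfolding cof_def by blast+
qed

lemma KpD: "v \<in> Kp n z \<Longrightarrow> \<forall>i<n. c i \<in> F \<Longrightarrow> (\<Sum>i<n. c i * z i) = 0 \<Longrightarrow> (\<Sum>i<n. c i * v i) = 0"
  unfolding Kp_def by simp

lemma Kp_Fvec: "v \<in> Kp n z \<Longrightarrow> v \<in> Fvec n"
  unfolding Kp_def by simp

lemma kp_wd:
  assumes v: "v \<in> Kp n z" and c: "\<forall>i<n. c i \<in> F" and d: "\<forall>i<n. d i \<in> F"
    and eq: "(\<Sum>i<n. c i * z i) = (\<Sum>i<n. d i * z i)"
  shows "(\<Sum>i<n. c i * v i) = (\<Sum>i<n. d i * v i)"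
proof -
  have "(\<Sum>i<n. (c i - d i) * z i) = 0" using eq by (simp add: left_diff_distrib sum_subtractf)
  moreover have "\<forall>i<n. c i - d i \<in> F" using c d Fdiff by blast
  ultimately have "(\<Sum>i<n. (c i - d i) * v i) = 0" using KpD[OF v] by simp
  then show ?thesis by (simp add: left_diff_distrib sum_subtractf)
qed

lemma ell_eq: "v \<in> Kp n z \<Longrightarrow> \<forall>i<n. c i \<in> F \<Longrightarrow> ell n z v (\<Sum>i<n. c i * z i) = (\<Sum>i<n. c i * v i)"
proof -
  assume v: "v \<in> Kp n z" and c: "\<forall>i<n. c i \<in> F"
  have s: "(\<Sum>i<n. c i * z i) \<in> spn n z" using c by (intro spanI_memI) auto
  show ?thesis unfolding ell_def
    by (rule kp_wd[OF v cof_props(1)[OF s] c cof_props(2)[OF s, symmetric]])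
qed

lemma ell_F: "v \<in> Fvec n \<Longrightarrow> s \<in> spn n z \<Longrightarrow> ell n z v s \<in> F"
  unfolding ell_def using cof_props(1) Fvec_F by (auto intro!: Fsum Fmult)

lemma ell_diff: assumes "v \<in> Kp n z" "s \<in> spn n z" "s' \<in> spn n z"
  shows "ell n z v (s - s') = ell n z v s - ell n z v s'"
proof -
  let ?c = "cof n z s" and ?d = "cof n z s'"
  have "s - s' = (\<Sum>i<n. ?c i * z i) - (\<Sum>i<n. ?d i * z i)"
    using cof_props(2)[OF assms(2)] cof_props(2)[OF assms(3)] by (rule arg_cong2)
  also have "\<dots> = (\<Sum>i<n. (?c i - ?d i) * z i)" by (simp add: left_diff_distrib sum_subtractf)
  finally have "s - s' = (\<Sum>i<n. (?c i - ?d i) * z i)" .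
  then have "ell n z v (s - s') = (\<Sum>i<n. (?c i - ?d i) * v i)"
    using ell_eq[OF assms(1), of "\<lambda>i. ?c i - ?d i"] cof_props(1)[OF assms(2)] cof_props(1)[OF assms(3)] Fdiff
    by simp
  also have "\<dots> = ell n z v s - ell n z v s'" unfolding ell_def by (simp add: left_diff_distrib sum_subtractf)
  finally show ?thesis .
qed

lemma ell_smult: assumes "v \<in> Kp n z" "s \<in> spn n z" "t \<in> F"
  shows "ell n z v (t * s) = t * ell n z v s"
proof -
  let ?c = "cof n z s"
  have "t * s = t * (\<Sum>i<n. ?c i * z i)" using cof_props(2)[OF assms(2)] by (rule arg_cong)
  also have "\<dots> = (\<Sum>i<n. (t * ?c i) * z i)" by (simp add: sum_distrib_left mult.assoc)
  finally have "t * s = (\<Sum>i<n. (t * ?c i) * z i)" .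
  then have "ell n z v (t * s) = (\<Sum>i<n. (t * ?c i) * v i)"
    using ell_eq[OF assms(1), of "\<lambda>i. t * ?c i"] cof_props(1)[OF assms(2)] Fmult assms(3)
    by simp
  also have "\<dots> = t * ell n z v s" unfolding ell_def by (simp add: sum_distrib_left mult.assoc)
  finally show ?thesis .
qed

lemma zero_spn: "0 \<in> spn n z"
  using subsp_spanI unfolding subsp_def by blast

lemma ell_zero: assumes "v \<in> Kp n z" shows "ell n z v 0 = 0"
  using ell_diff[OF assms zero_spn zero_spn] by simp

lemma rk_scal: "(\<And>i. i < n \<Longrightarrow> v i \<in> F) \<Longrightarrow> rk F n (\<lambda>i. c * v i) \<le> 1"
proof -
  assume v: "\<And>i. i < n \<Longrightarrow> v i \<in> F"
  have "spn n (\<lambda>i. c * v i) \<subseteq> (\<lambda>t. c * t) ` F"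
  proof
    fix s assume "s \<in> spn n (\<lambda>i. c * v i)"
    then obtain a where a: "\<forall>i\<in>{..<n}. a i \<in> F" "s = (\<Sum>i<n. a i * (c * v i))" unfolding spanI_def by blast
    then have "s = c * (\<Sum>i<n. a i * v i)" by (simp add: sum_distrib_left mult_ac)
    moreover have "(\<Sum>i<n. a i * v i) \<in> F" using a(1) v by (auto intro!: Fsum Fmult)
    ultimately show "s \<in> (\<lambda>t. c * t) ` F" by blast
  qed
  then have "card (spn n (\<lambda>i. c * v i)) \<le> card ((\<lambda>t. c * t) ` F)" by (intro card_mono) auto
  also have "\<dots> \<le> q" by (rule card_image_le) simp
  finally show ?thesis using rk_le_iff by simp
qed

context
  fixes n :: nat and z v :: "nat \<Rightarrow> 'k" and l :: 'k
  assumes v: "v \<in> Fvec n"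
begin

definition "yv = (\<lambda>i. z i + l * v i)"

lemma yv_sum: "(\<Sum>i<n. c i * yv i) = (\<Sum>i<n. c i * z i) + l * (\<Sum>i<n. c i * v i)"
proof -
  have "(\<Sum>i<n. c i * yv i) = (\<Sum>i<n. c i * z i) + (\<Sum>i<n. c i * (l * v i))"
    unfolding yv_def by (simp add: distrib_left sum.distrib)
  also have "(\<Sum>i<n. c i * (l * v i)) = l * (\<Sum>i<n. c i * v i)"
    by (simp add: sum_distrib_left mult.left_commute)
  finally show ?thesis .
qed

lemma spn_y_sub: "spn n yv \<subseteq> {s + t * l | s t. s \<in> spn n z \<and> t \<in> F}"
proof
  fix w assume "w \<in> spn n yv"
  then obtain c where c: "\<forall>i\<in>{..<n}. c i \<in> F" "w = (\<Sum>i<n. c i * yv i)" unfolding spanI_def by blast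
  then have "w = (\<Sum>i<n. c i * z i) + (\<Sum>i<n. c i * v i) * l"
    by (simp add: yv_sum mult.commute)
  moreover have "(\<Sum>i<n. c i * z i) \<in> spn n z" using c(1) by (intro spanI_memI) auto
  moreover have "(\<Sum>i<n. c i * v i) \<in> F" using c(1) Fvec_F[OF v] by (auto intro!: Fsum Fmult)
  ultimately show "w \<in> {s + t * l | s t. s \<in> spn n z \<and> t \<in> F}" by blast
qed

lemma K1: assumes "v \<notin> Kp n z" shows "l \<in> spn n yv" "spn n z \<subseteq> spn n yv"
proof -
  have "\<not> (\<forall>c. (\<forall>i<n. c i \<in> F) \<longrightarrow> (\<Sum>i<n. c i * z i) = 0 \<longrightarrow> (\<Sum>i<n. c i * v i) = 0)"
    using assms v unfolding Kp_def by simp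
  then obtain c where c: "\<forall>i<n. c i \<in> F" "(\<Sum>i<n. c i * z i) = 0" "(\<Sum>i<n. c i * v i) \<noteq> 0"
    by blast
  let ?s = "\<Sum>i<n. c i * v i"
  have sF: "?s \<in> F" using c(1) Fvec_F[OF v] by (auto intro!: Fsum Fmult)
  have "(\<Sum>i<n. (c i / ?s) * yv i) = (\<Sum>i<n. c i * yv i) / ?s"
    by (simp add: sum_divide_distrib)
  also have "(\<Sum>i<n. c i * yv i) = (\<Sum>i<n. c i * z i) + ?s * l"
    by (simp add: yv_sum mult.commute)
  finally have "(\<Sum>i<n. (c i / ?s) * yv i) = l" using c(2,3) by simp
  moreover have "\<forall>i<n. c i / ?s \<in> F" using c(1) sF Fdiv by blast
  ultimately show l: "l \<in> spn n yv" using spanI_memI[of "{..<n}" "\<lambda>i. c i / ?s" yv] by auto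
  show "spn n z \<subseteq> spn n yv"
  proof (rule spanI_sub[OF subsp_spanI])
    fix i assume i: "i \<in> {..<n}"
    have "yv i \<in> spn n yv" using i by (intro spanI_mem) auto
    moreover have "v i * l \<in> spn n yv" using l Fvec_F[OF v] i subsp_spanI unfolding subsp_def by auto
    ultimately have "yv i - v i * l \<in> spn n yv" by (rule subsp_diff[OF subsp_spanI])
    then show "z i \<in> spn n yv" unfolding yv_def by (simp add: mult.commute)
  qed
qed

lemma K2: assumes "v \<in> Kp n z" shows "spn n yv = (\<lambda>s. s + l * ell n z v s) ` spn n z"
proof
  show "spn n yv \<subseteq> (\<lambda>s. s + l * ell n z v s) ` spn n z"
  proof
    fix w assume "w \<in> spn n yv"
    then obtain c where c: "\<forall>i\<in>{..<n}. c i \<in> F" "w = (\<Sum>i<n. c i * yv i)" unfolding spanI_def by blast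
    then have "w = (\<Sum>i<n. c i * z i) + l * (\<Sum>i<n. c i * v i)"
      by (simp add: yv_sum)
    moreover have "ell n z v (\<Sum>i<n. c i * z i) = (\<Sum>i<n. c i * v i)" using ell_eq[OF assms] c(1) by simp
    moreover have "(\<Sum>i<n. c i * z i) \<in> spn n z" using c(1) by (intro spanI_memI) auto
    ultimately show "w \<in> (\<lambda>s. s + l * ell n z v s) ` spn n z" by force
  qed
  show "(\<lambda>s. s + l * ell n z v s) ` spn n z \<subseteq> spn n yv"
  proof clarify
    fix s assume s: "s \<in> spn n z"
    let ?c = "cof n z s"
    have "s + l * ell n z v s = (\<Sum>i<n. ?c i * z i) + l * ell n z v s"
      using cof_props(2)[OF s] by (rule arg_cong)
    also have "\<dots> = (\<Sum>i<n. ?c i * yv i)" unfolding yv_sum ell_def ..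
    finally have "s + l * ell n z v s = (\<Sum>i<n. ?c i * yv i)" .
    then show "s + l * ell n z v s \<in> spn n yv"
      using cof_props(1)[OF s] spanI_memI[of "{..<n}" ?c yv] by auto
  qed
qed

lemma psi_inj: assumes "v \<in> Kp n z"
  shows "inj_on (\<lambda>s. s + l * ell n z v s) (spn n z) \<longleftrightarrow> \<not> (l \<in> spn n z \<and> l \<noteq> 0 \<and> ell n z v l = -1)"
proof
  assume inj: "inj_on (\<lambda>s. s + l * ell n z v s) (spn n z)"
  show "\<not> (l \<in> spn n z \<and> l \<noteq> 0 \<and> ell n z v l = -1)"
  proof
    assume h: "l \<in> spn n z \<and> l \<noteq> 0 \<and> ell n z v l = -1"
    have "l + l * ell n z v l = 0 + l * ell n z v 0" using h ell_zero[OF assms] by simp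
    then have "l = 0" using inj h zero_spn unfolding inj_on_def by blast
    then show False using h by simp
  qed
next
  assume h: "\<not> (l \<in> spn n z \<and> l \<noteq> 0 \<and> ell n z v l = -1)"
  show "inj_on (\<lambda>s. s + l * ell n z v s) (spn n z)"
  proof (rule inj_onI)
    fix s s' assume s: "s \<in> spn n z" "s' \<in> spn n z" and eq: "s + l * ell n z v s = s' + l * ell n z v s'"
    let ?d = "s - s'"
    have dS: "?d \<in> spn n z" using s subsp_diff[OF subsp_spanI] by blast
    have ed: "ell n z v ?d = ell n z v s - ell n z v s'" using ell_diff[OF assms s] .
    have deq: "?d + l * ell n z v ?d = 0" using eq unfolding ed by (simp add: algebra_simps)
    show "s = s'"
    proof (rule ccontr)
      assume "s \<noteq> s'"
      then have dnz: "?d \<noteq> 0" by simp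
      have en: "ell n z v ?d \<noteq> 0" using deq dnz by auto
      have lnz: "l \<noteq> 0" using deq dnz by auto
      have eF: "ell n z v ?d \<in> F" using ell_F[OF Kp_Fvec[OF assms] dS] .
      have leq: "l = (- 1 / ell n z v ?d) * ?d" using deq en
        by (simp add: field_simps add_eq_0_iff eq_neg_iff_add_eq_0)
      have cF: "- 1 / ell n z v ?d \<in> F" using eF by (intro Fdiv Fneg F1)
      have "\<forall>t\<in>F. \<forall>a\<in>spn n z. t * a \<in> spn n z" using subsp_spanI unfolding subsp_def by blast
      then have "(- 1 / ell n z v ?d) * ?d \<in> spn n z" using cF dS by blast
      then have lS: "l \<in> spn n z" using leq by simp
      have "ell n z v l = (- 1 / ell n z v ?d) * ell n z v ?d"
        using leq ell_smult[OF assms dS cF] by simp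
      then have "ell n z v l = -1" using en by simp
      then show False using h lS lnz by simp
    qed
  qed
qed

lemma rank_update:
  "rk F n yv = (if l \<notin> spn n z \<and> v \<notin> Kp n z then rk F n z + 1
      else if l \<in> spn n z \<and> l \<noteq> 0 \<and> v \<in> Kp n z \<and> ell n z v l = -1 then rk F n z - 1
      else rk F n z)"
proof (cases "v \<in> Kp n z")
  case False
  show ?thesis
  proof (cases "l \<in> spn n z")
    case True
    have "spn n yv \<subseteq> spn n z" using spn_y_sub ext_set_in[OF subsp_spanI True] by simp
    then have "spn n yv = spn n z" using K1(2)[OF False] by (rule subset_antisym)
    from rk_spn_eq[OF this] show ?thesis using True False by simp
  next
    case lN: False
    have "{s + t * l | s t. s \<in> spn n z \<and> t \<in> F} \<subseteq> spn n yv"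
    proof clarify
      fix s t assume st: "s \<in> spn n z" "t \<in> F"
      have "s \<in> spn n yv" using st K1(2)[OF False] by blast
      moreover have "t * l \<in> spn n yv" using st K1(1)[OF False] subsp_spanI[of "{..<n}" yv] unfolding subsp_def by blast
      ultimately show "s + t * l \<in> spn n yv" using subsp_spanI[of "{..<n}" yv] unfolding subsp_def by blast
    qed
    then have "spn n yv = {s + t * l | s t. s \<in> spn n z \<and> t \<in> F}" using spn_y_sub by blast
    then have "card (spn n yv) = q ^ Suc (rk F n z)"
      using ext_set_card[OF subsp_spanI lN] card_spn[of n z] by simp
    then have "rk F n yv = Suc (rk F n z)" using rk_eq_iff by blast
    then show ?thesis using False lN by simp
  qed
next
  case True
  have sp: "spn n yv = (\<lambda>s. s + l * ell n z v s) ` spn n z" using K2[OF True] .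
  show ?thesis
  proof (cases "l \<in> spn n z \<and> l \<noteq> 0 \<and> ell n z v l = -1")
    case False
    then have "inj_on (\<lambda>s. s + l * ell n z v s) (spn n z)" using psi_inj[OF True] by simp
    from card_image[OF this] have "card (spn n yv) = card (spn n z)" using sp by simp
    then have "rk F n yv = rk F n z" using card_spn[of n z] rk_eq_iff by metis
    then show ?thesis using False True by auto
  next
    case c: True
    then have ni: "\<not> inj_on (\<lambda>s. s + l * ell n z v s) (spn n z)" using psi_inj[OF True] by simp
    have "card (spn n yv) \<noteq> card (spn n z)"
      using ni sp inj_on_iff_eq_card[of "spn n z" "\<lambda>s. s + l * ell n z v s"] by simp
    moreover have "card (spn n yv) \<le> card (spn n z)" unfolding sp by (rule card_image_le) simp
    ultimately have "card (spn n yv) < q ^ rk F n z" using card_spn[of n z] by simp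
    then have lt: "rk F n yv < rk F n z" using rk_less_iff by blast
    have "rk F n z = rk F n (\<lambda>i. yv i + (- l) * v i)" by (rule rk_cong) (simp add: yv_def)
    also have "\<dots> \<le> rk F n yv + rk F n (\<lambda>i. (- l) * v i)" by (rule rk_add)
    also have "\<dots> \<le> rk F n yv + 1" using rk_scal[of n v "- l"] Fvec_F[OF v] by simp
    finally have "rk F n yv = rk F n z - 1" using lt by simp
    then show ?thesis using c True by simp
  qed
qed

end

end



lemma fiber_sum:
  assumes "finite A" "finite B" "f ` A \<subseteq> B"
  shows "card A = (\<Sum>y\<in>B. card {x\<in>A. f x = y})"
proof -
  have "A = (\<Union>y\<in>B. {x\<in>A. f x = y})" using assms by auto
  also have "card \<dots> = (\<Sum>y\<in>B. card {x\<in>A. f x = y})"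
    using assms by (subst card_UN_disjoint) auto
  finally show ?thesis .
qed

context rkf begin

lemma card_Fvec: "card (Fvec n) = q ^ n"
  unfolding Fvec_def by (simp add: card_PiE)

lemma finite_Fvec: "finite (Fvec n)"
  unfolding Fvec_def by (rule finite_PiE) auto

lemma lin_form:
  fixes a w :: "nat \<Rightarrow> 'k"
  assumes "j < n" "I \<subseteq> {..<n}"
  shows "(\<Sum>i<n. ((if i = j then 1 else 0) - (if i \<in> I then a i else 0)) * w i) = w j - (\<Sum>i\<in>I. a i * w i)"
proof -
  have "(\<Sum>i<n. ((if i = j then 1 else 0) - (if i \<in> I then a i else 0)) * w i)
      = (\<Sum>i<n. (if i = j then w i else 0)) - (\<Sum>i<n. (if i \<in> I then a i * w i else 0))"
  proof -
    have "((if i = j then 1 else 0) - (if i \<in> I then a i else 0)) * w i = (if i = j then w i else 0) - (if i \<in> I then a i * w i else 0)" for i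
      by (auto simp: algebra_simps)
    then show ?thesis by (simp add: sum_subtractf)
  qed
  also have "(\<Sum>i<n. (if i = j then w i else 0)) = w j" using assms(1) by simp
  also have "(\<Sum>i<n. (if i \<in> I then a i * w i else 0)) = (\<Sum>i\<in>I. a i * w i)"
  proof -
    have "{..<n} \<inter> I = I" using assms(2) by blast
    then show ?thesis by (simp add: sum.If_cases)
  qed
  finally show ?thesis .
qed

lemma lineq_count:
  assumes fI: "finite I" and k: "k \<in> I" and d: "\<forall>i\<in>I. d i \<in> F" and dk: "d k \<noteq> 0" and b: "b \<in> F"
  shows "card {u \<in> I \<rightarrow>\<^sub>E F. (\<Sum>i\<in>I. d i * u i) = b} = q ^ (card I - 1)"
proof -
  define f where "f w = (b - (\<Sum>i\<in>I - {k}. d i * w i)) / d k" for w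
  have sumk: "(\<Sum>i\<in>I. d i * u i) = d k * u k + (\<Sum>i\<in>I - {k}. d i * u i)" for u
    using fI k by (simp add: sum.remove)
  have "{u \<in> I \<rightarrow>\<^sub>E F. (\<Sum>i\<in>I. d i * u i) = b} = (\<lambda>w. w(k := f w)) ` ((I - {k}) \<rightarrow>\<^sub>E F)"
  proof
    show "{u \<in> I \<rightarrow>\<^sub>E F. (\<Sum>i\<in>I. d i * u i) = b} \<subseteq> (\<lambda>w. w(k := f w)) ` ((I - {k}) \<rightarrow>\<^sub>E F)"
    proof
      fix u assume "u \<in> {u \<in> I \<rightarrow>\<^sub>E F. (\<Sum>i\<in>I. d i * u i) = b}"
      then have u: "u \<in> I \<rightarrow>\<^sub>E F" "(\<Sum>i\<in>I. d i * u i) = b" by auto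
      let ?w = "restrict u (I - {k})"
      have "(\<Sum>i\<in>I - {k}. d i * ?w i) = (\<Sum>i\<in>I - {k}. d i * u i)" by simp
      then have "f ?w = u k" using u(2) sumk[of u] dk unfolding f_def by (simp add: field_simps)
      then have "u = ?w(k := f ?w)" using u(1) k by (auto simp: fun_eq_iff PiE_def extensional_def)
      moreover have "?w \<in> (I - {k}) \<rightarrow>\<^sub>E F" using u(1) by auto
      ultimately show "u \<in> (\<lambda>w. w(k := f w)) ` ((I - {k}) \<rightarrow>\<^sub>E F)" by blast
    qed
    show "(\<lambda>w. w(k := f w)) ` ((I - {k}) \<rightarrow>\<^sub>E F) \<subseteq> {u \<in> I \<rightarrow>\<^sub>E F. (\<Sum>i\<in>I. d i * u i) = b}"
    proof clarify
      fix w assume w: "w \<in> (I - {k}) \<rightarrow>\<^sub>E F"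
      have fF: "f w \<in> F" unfolding f_def using w d b k
        by (intro Fdiv Fdiff Fsum Fmult) (auto simp: PiE_def Pi_def)
      have "w(k := f w) \<in> I \<rightarrow>\<^sub>E F" using w fF k by (auto simp: PiE_def Pi_def extensional_def)
      moreover have "(\<Sum>i\<in>I - {k}. d i * (w(k := f w)) i) = (\<Sum>i\<in>I - {k}. d i * w i)"
        by (rule sum.cong) auto
      then have "(\<Sum>i\<in>I. d i * (w(k := f w)) i) = b"
        using sumk[of "w(k := f w)"] dk unfolding f_def by simp
      ultimately show "w(k := f w) \<in> I \<rightarrow>\<^sub>E F \<and> (\<Sum>i\<in>I. d i * (w(k := f w)) i) = b" by simp
    qed
  qed
  moreover have "inj_on (\<lambda>w. w(k := f w)) ((I - {k}) \<rightarrow>\<^sub>E F)"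
  proof (rule inj_onI)
    fix w w' assume w: "w \<in> (I - {k}) \<rightarrow>\<^sub>E F" "w' \<in> (I - {k}) \<rightarrow>\<^sub>E F" and eq: "w(k := f w) = w'(k := f w')"
    have "w k = undefined" "w' k = undefined" using w by (auto simp: PiE_def extensional_def)
    show "w = w'"
    proof (rule ext)
      fix i show "w i = w' i"
        using fun_cong[OF eq, of i] \<open>w k = undefined\<close> \<open>w' k = undefined\<close> by (cases "i = k") auto
    qed
  qed
  ultimately have "card {u \<in> I \<rightarrow>\<^sub>E F. (\<Sum>i\<in>I. d i * u i) = b} = card ((I - {k}) \<rightarrow>\<^sub>E F)"
    by (simp add: card_image)
  also have "\<dots> = q ^ (card I - 1)" using fI k by (simp add: card_PiE)
  finally show ?thesis .
qed

end



context rkf begin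

context
  fixes n :: nat and z :: "nat \<Rightarrow> 'k" and I :: "nat set"
  assumes I: "I \<subseteq> {..<n}" "lin_indep_over F z I" "spanI I z = spn n z"
begin

lemma fI: "finite I" using I(1) finite_subset by blast

definition "Aco j = (SOME a. (\<forall>i\<in>I. a i \<in> F) \<and> z j = (\<Sum>i\<in>I. a i * z i))"

lemma Aco: assumes "j < n" shows "\<forall>i\<in>I. Aco j i \<in> F" "z j = (\<Sum>i\<in>I. Aco j i * z i)"
proof -
  have "z j \<in> spanI I z" using I(3) assms by (simp add: spanI_mem)
  then have "\<exists>a. (\<forall>i\<in>I. a i \<in> F) \<and> z j = (\<Sum>i\<in>I. a i * z i)" unfolding spanI_def by blast
  from someI_ex[OF this] show "\<forall>i\<in>I. Aco j i \<in> F" "z j = (\<Sum>i\<in>I. Aco j i * z i)"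
    unfolding Aco_def by blast+
qed

lemma Aco_delta: assumes "j \<in> I" "k \<in> I" shows "Aco j k = (if k = j then 1 else 0)"
proof -
  have j: "j < n" using assms I(1) by auto
  have "(\<Sum>i\<in>I. (if i = j then 1 else 0) * z i) = (\<Sum>i\<in>I. (if i = j then z i else 0))"
    by (intro sum.cong) auto
  also have "\<dots> = z j" using assms(1) fI by simp
  finally have "(\<Sum>i\<in>I. (if i = j then 1 else 0) * z i) = z j" .
  then have "(\<Sum>i\<in>I. (Aco j i - (if i = j then 1 else 0)) * z i) = 0"
    using Aco(2)[OF j] by (simp add: left_diff_distrib sum_subtractf)
  moreover have "\<forall>i\<in>I. Aco j i - (if i = j then 1 else 0) \<in> F" using Aco(1)[OF j] F0 F1 Fdiff by auto
  ultimately have "Aco j k - (if k = j then 1 else 0) = 0"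
    using indepD[OF I(2), of "\<lambda>i. Aco j i - (if i = j then 1 else 0)"] assms(2) by blast
  then show ?thesis by simp
qed

lemma Kp_det: assumes "v \<in> Kp n z" "j < n" shows "v j = (\<Sum>i\<in>I. Aco j i * v i)"
proof -
  let ?c = "\<lambda>i. (if i = j then 1 else 0) - (if i \<in> I then Aco j i else 0)"
  have cF: "\<forall>i<n. ?c i \<in> F" using Aco(1)[OF assms(2)] F0 F1 Fdiff by auto
  have "(\<Sum>i<n. ?c i * z i) = 0" using lin_form[OF assms(2) I(1)] Aco(2)[OF assms(2)] by simp
  then have "(\<Sum>i<n. ?c i * v i) = 0" using KpD[OF assms(1) cF] by simp
  then show ?thesis using lin_form[OF assms(2) I(1)] by simp
qed

lemma Kp_bij: "bij_betw (\<lambda>v. restrict v I) (Kp n z) (I \<rightarrow>\<^sub>E F)"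
proof (rule bij_betw_imageI)
  show "inj_on (\<lambda>v. restrict v I) (Kp n z)"
  proof (rule inj_onI)
    fix v w assume v: "v \<in> Kp n z" and w: "w \<in> Kp n z" and eq: "restrict v I = restrict w I"
    have vI: "v i = w i" if "i \<in> I" for i using fun_cong[OF eq, of i] that by simp
    show "v = w"
    proof (rule ext)
      fix j show "v j = w j"
      proof (cases "j < n")
        case True
        then show ?thesis using Kp_det[OF v True] Kp_det[OF w True] vI by simp
      next
        case False
        then show ?thesis using Kp_Fvec[OF v] Kp_Fvec[OF w] unfolding Fvec_def by (simp add: PiE_def extensional_def)
      qed
    qed
  qed
  show "(\<lambda>v. restrict v I) ` Kp n z = I \<rightarrow>\<^sub>E F"
  proof
    show "(\<lambda>v. restrict v I) ` Kp n z \<subseteq> I \<rightarrow>\<^sub>E F"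
      using Kp_Fvec I(1) unfolding Fvec_def by (fastforce simp: PiE_def Pi_def)
    show "I \<rightarrow>\<^sub>E F \<subseteq> (\<lambda>v. restrict v I) ` Kp n z"
    proof
      fix u assume u: "u \<in> I \<rightarrow>\<^sub>E F"
      define v where "v = restrict (\<lambda>j. \<Sum>i\<in>I. Aco j i * u i) {..<n}"
      have uF: "\<forall>i\<in>I. u i \<in> F" using u by auto
      have vF: "v \<in> Fvec n" unfolding v_def Fvec_def
        using Aco(1) uF by (auto intro!: Fsum Fmult)
      have "v \<in> Kp n z" unfolding Kp_def
      proof (intro CollectI conjI vF allI impI)
        fix c assume c: "\<forall>i<n. c i \<in> F" and cz: "(\<Sum>j<n. c j * z j) = 0"
        have "(\<Sum>j<n. c j * z j) = (\<Sum>j<n. c j * (\<Sum>i\<in>I. Aco j i * z i))"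
          using Aco(2) by (intro sum.cong) auto
        also have "\<dots> = (\<Sum>i\<in>I. (\<Sum>j<n. c j * Aco j i) * z i)"
          by (simp add: sum_distrib_left sum_distrib_right sum.swap[of _ I] mult.assoc)
        finally have "(\<Sum>i\<in>I. (\<Sum>j<n. c j * Aco j i) * z i) = 0" using cz by simp
        moreover have "\<forall>i\<in>I. (\<Sum>j<n. c j * Aco j i) \<in> F" using c Aco(1) by (auto intro!: Fsum Fmult)
        ultimately have z0: "\<forall>i\<in>I. (\<Sum>j<n. c j * Aco j i) = 0"
          using indepD[OF I(2), of "\<lambda>i. \<Sum>j<n. c j * Aco j i"] by blast
        have "(\<Sum>j<n. c j * v j) = (\<Sum>j<n. c j * (\<Sum>i\<in>I. Aco j i * u i))"
          unfolding v_def by (intro sum.cong) auto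
        also have "\<dots> = (\<Sum>i\<in>I. (\<Sum>j<n. c j * Aco j i) * u i)"
          by (simp add: sum_distrib_left sum_distrib_right sum.swap[of _ I] mult.assoc)
        also have "\<dots> = 0" using z0 by simp
        finally show "(\<Sum>j<n. c j * v j) = 0" .
      qed
      moreover have "restrict v I = u"
      proof (rule ext)
        fix i show "restrict v I i = u i"
        proof (cases "i \<in> I")
          case True
          then have "i < n" using I(1) by auto
          have "(\<Sum>k\<in>I. Aco i k * u k) = (\<Sum>k\<in>I. (if k = i then u k else 0))"
            using Aco_delta[OF True] by (intro sum.cong) auto
          also have "\<dots> = u i" using True fI by simp
          finally show ?thesis using True \<open>i < n\<close> unfolding v_def by simp
        next
          case False then show ?thesis using u by (simp add: PiE_def extensional_def)
        qed
      qed
      ultimately show "u \<in> (\<lambda>v. restrict v I) ` Kp n z" by blast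
    qed
  qed
qed

lemma card_Kp: "card (Kp n z) = q ^ card I"
  using bij_betw_same_card[OF Kp_bij] fI by (simp add: card_PiE)

lemma Kp_restrict_count:
  "card {v \<in> Kp n z. P (restrict v I)} = card {u \<in> I \<rightarrow>\<^sub>E F. P u}"
proof -
  have "bij_betw (\<lambda>v. restrict v I) {v \<in> Kp n z. P (restrict v I)} {u \<in> I \<rightarrow>\<^sub>E F. P u}"
    using Kp_bij unfolding bij_betw_def inj_on_def by auto
  then show ?thesis by (rule bij_betw_same_card)
qed

lemma ell_count:
  assumes l: "l \<in> spn n z" "l \<noteq> 0"
  shows "card {v \<in> Kp n z. ell n z v l = -1} = q ^ (card I - 1)"
proof -
  obtain d where d: "\<forall>i\<in>I. d i \<in> F" "l = (\<Sum>i\<in>I. d i * z i)"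
    using l(1) I(3)[symmetric] unfolding spanI_def by blast
  let ?c = "\<lambda>i. if i \<in> I then d i else 0"
  have cF: "\<forall>i<n. ?c i \<in> F" using d(1) F0 by auto
  have sI: "(\<Sum>i<n. ?c i * w i) = (\<Sum>i\<in>I. d i * w i)" for w :: "nat \<Rightarrow> 'k"
  proof -
    have "(\<Sum>i<n. ?c i * w i) = (\<Sum>i<n. if i \<in> I then d i * w i else 0)" by (intro sum.cong) auto
    also have "{..<n} \<inter> I = I" using I(1) by blast
    then have "(\<Sum>i<n. if i \<in> I then d i * w i else 0) = (\<Sum>i\<in>I. d i * w i)" by (simp add: sum.If_cases)
    finally show ?thesis .
  qed
  have ellv: "ell n z v l = (\<Sum>i\<in>I. d i * restrict v I i)" if "v \<in> Kp n z" for v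
  proof -
    have "ell n z v l = ell n z v (\<Sum>i<n. ?c i * z i)" using sI d(2) by simp
    also have "\<dots> = (\<Sum>i<n. ?c i * v i)" by (rule ell_eq[OF that cF])
    also have "\<dots> = (\<Sum>i\<in>I. d i * restrict v I i)" using sI by simp
    finally show ?thesis .
  qed
  obtain k where k: "k \<in> I" "d k \<noteq> 0"
  proof (rule ccontr)
    assume "\<not> thesis"
    then have "\<forall>i\<in>I. d i = 0" using that by blast
    then have "l = 0" using d(2) by simp
    then show False using l(2) by simp
  qed
  have "{v \<in> Kp n z. ell n z v l = -1} = {v \<in> Kp n z. (\<Sum>i\<in>I. d i * restrict v I i) = -1}"
    using ellv by auto
  also have "card \<dots> = card {u \<in> I \<rightarrow>\<^sub>E F. (\<Sum>i\<in>I. d i * u i) = -1}"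
    by (rule Kp_restrict_count)
  also have "\<dots> = q ^ (card I - 1)"
    by (rule lineq_count[OF fI k(1) d(1) k(2)]) (simp add: Fneg F1)
  finally show ?thesis .
qed

end

lemma card_Kp_rk: "card (Kp n z) = q ^ rk F n z"
proof -
  obtain I where I: "I \<subseteq> {..<n}" "lin_indep_over F z I" "card I = rk F n z" using rk_obtain by blast
  have sp: "spanI I z = spn n z" using max_spans[OF I] .
  show ?thesis using card_Kp[OF I(1,2) sp] I(3) by simp
qed

lemma ell_count_rk:
  assumes l: "l \<in> spn n z" "l \<noteq> 0"
  shows "card {v \<in> Kp n z. ell n z v l = -1} = q ^ (rk F n z - 1)"
proof -
  obtain I where I: "I \<subseteq> {..<n}" "lin_indep_over F z I" "card I = rk F n z" using rk_obtain by blast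
  have sp: "spanI I z = spn n z" using max_spans[OF I] .
  show ?thesis using ell_count[OF I(1,2) sp l] I(3) by simp
qed

end



context rkf begin

lemma rank_upd:
  assumes "v \<in> Fvec n"
  shows "rk F n (\<lambda>i. z i + l * v i) = (if l \<notin> spn n z \<and> v \<notin> Kp n z then rk F n z + 1
      else if l \<in> spn n z \<and> l \<noteq> 0 \<and> v \<in> Kp n z \<and> ell n z v l = -1 then rk F n z - 1
      else rk F n z)"
  using rank_update[OF assms, of z l] by (simp only: yv_def[OF assms])

definition mu :: "nat \<Rightarrow> 'k \<Rightarrow> (nat \<Rightarrow> 'k) \<Rightarrow> nat \<Rightarrow> 'k" where
  "mu n l v = restrict (\<lambda>i. l * v i) {..<n}"

lemma mu_vecs: "mu n l v \<in> vecs n" unfolding mu_def vecs_def by simp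

lemma rk_mu: "v \<in> Fvec n \<Longrightarrow> rk F n (mu n l v) \<le> 1"
proof -
  assume v: "v \<in> Fvec n"
  have "rk F n (mu n l v) = rk F n (\<lambda>i. l * v i)" by (rule rk_cong) (simp add: mu_def)
  also have "\<dots> \<le> 1" using rk_scal[of n v l] Fvec_F[OF v] by simp
  finally show ?thesis .
qed

lemma rank1_form:
  assumes e: "e \<in> vecs n" "rk F n e \<le> 1" and j: "j < n" "e j \<noteq> 0"
  shows "\<exists>v. v \<in> Fvec n \<and> e = mu n (e j) v"
proof -
  let ?S = "(\<lambda>t. t * e j) ` F"
  have sub: "?S \<subseteq> spn n e"
  proof
    fix s assume "s \<in> ?S"
    then obtain t where t: "t \<in> F" "s = t * e j" by blast
    have "e j \<in> spn n e" using j by (intro spanI_mem) auto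
    then show "s \<in> spn n e" using t subsp_spanI[of "{..<n}" e] unfolding subsp_def by blast
  qed
  have "card ?S = q" using j(2) by (intro card_image) (auto simp: inj_on_def)
  moreover have "card (spn n e) \<le> q" using e(2) rk_le_iff[of n e 1] by simp
  ultimately have eqS: "?S = spn n e" using sub by (intro card_seteq) auto
  define v where "v = restrict (\<lambda>i. e i / e j) {..<n}"
  have "v \<in> Fvec n" unfolding Fvec_def v_def
  proof (intro restrict_PiE_iff[THEN iffD2] ballI)
    fix i assume "i \<in> {..<n}"
    then have "e i \<in> spn n e" by (intro spanI_mem) auto
    then obtain t where "t \<in> F" "e i = t * e j" using eqS by blast
    then show "e i / e j \<in> F" using j(2) by simp
  qed
  moreover have "e = mu n (e j) v"
  proof (rule ext)
    fix i show "e i = mu n (e j) v i"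
    proof (cases "i < n")
      case True then show ?thesis unfolding mu_def v_def using j(2) by simp
    next
      case False then show ?thesis using e(1) unfolding mu_def v_def vecs_def by (simp add: PiE_def extensional_def)
    qed
  qed
  ultimately show ?thesis by blast
qed

lemma fiber_count:
  assumes l0: "l0 \<noteq> 0" and v0: "v0 \<in> Fvec n" and j: "j < n" "v0 j \<noteq> 0"
  shows "card {p \<in> UNIV \<times> Fvec n. mu n (fst p) (snd p) = mu n l0 v0} = q - 1"
proof -
  define g where "g t = (t * l0, restrict (\<lambda>i. v0 i / t) {..<n})" for t
  have "{p \<in> UNIV \<times> Fvec n. mu n (fst p) (snd p) = mu n l0 v0} = g ` (F - {0})"
  proof
    show "{p \<in> UNIV \<times> Fvec n. mu n (fst p) (snd p) = mu n l0 v0} \<subseteq> g ` (F - {0})"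
    proof
      fix p assume "p \<in> {p \<in> UNIV \<times> Fvec n. mu n (fst p) (snd p) = mu n l0 v0}"
      then obtain l v where p: "p = (l, v)" and v: "v \<in> Fvec n" and eq: "mu n l v = mu n l0 v0"
        by (cases p) auto
      have eqi: "l * v i = l0 * v0 i" if "i < n" for i using fun_cong[OF eq, of i] that by (simp add: mu_def)
      have lnz: "l \<noteq> 0" and vj: "v j \<noteq> 0" using eqi[OF j(1)] l0 j(2) by auto
      define t where "t = v0 j / v j"
      have tF: "t \<in> F" unfolding t_def using Fvec_F[OF v0 j(1)] Fvec_F[OF v j(1)] by (rule Fdiv)
      have tnz: "t \<noteq> 0" unfolding t_def using vj j(2) by simp
      have lt: "l = t * l0" unfolding t_def using eqi[OF j(1)] vj by (simp add: field_simps)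
      have "v = restrict (\<lambda>i. v0 i / t) {..<n}"
      proof (rule ext)
        fix i show "v i = restrict (\<lambda>i. v0 i / t) {..<n} i"
        proof (cases "i < n")
          case True
          have "t * l0 * v i = l0 * v0 i" using eqi[OF True] lt by simp
          then show ?thesis using True tnz l0 by (simp add: field_simps)
        next
          case False then show ?thesis using v unfolding Fvec_def by (simp add: PiE_def extensional_def)
        qed
      qed
      then show "p \<in> g ` (F - {0})" using tF tnz lt p unfolding g_def by blast
    qed
    show "g ` (F - {0}) \<subseteq> {p \<in> UNIV \<times> Fvec n. mu n (fst p) (snd p) = mu n l0 v0}"
    proof
      fix x assume "x \<in> g ` (F - {0})"
      then obtain t where t: "t \<in> F" "t \<noteq> 0" and x: "x = g t" by blast
      have "snd (g t) \<in> Fvec n" unfolding g_def Fvec_def using Fvec_F[OF v0] t Fdiv by auto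
      moreover have "mu n (fst (g t)) (snd (g t)) = mu n l0 v0"
        unfolding g_def mu_def using t by (auto simp: fun_eq_iff)
      ultimately show "x \<in> {p \<in> UNIV \<times> Fvec n. mu n (fst p) (snd p) = mu n l0 v0}"
        unfolding x by (cases "g t") simp
    qed
  qed
  moreover have "inj_on g (F - {0})" unfolding g_def inj_on_def using l0 by auto
  from card_image[OF this] have "card (g ` (F - {0})) = q - 1" using F0 by (simp add: card_Diff_singleton)
  ultimately show ?thesis by simp
qed

lemma pair_vec:
  assumes nR: "\<not> R (rk F n z)"
  shows "card {p \<in> UNIV \<times> Fvec n. R (rk F n (\<lambda>i. z i + fst p * snd p i))}
       = (q - 1) * card {e \<in> vecs n. rk F n e \<le> 1 \<and> R (rk F n (\<lambda>i. z i + e i))}"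
proof -
  let ?S = "{p \<in> UNIV \<times> Fvec n. R (rk F n (\<lambda>i. z i + fst p * snd p i))}"
  let ?T = "{e \<in> vecs n. rk F n e \<le> 1 \<and> R (rk F n (\<lambda>i. z i + e i))}"
  let ?m = "\<lambda>p. mu n (fst p) (snd p)"
  have rkm: "rk F n (\<lambda>i. z i + mu n l v i) = rk F n (\<lambda>i. z i + l * v i)" for l v
    by (rule rk_cong) (simp add: mu_def)
  have finS: "finite ?S" using finite_Fvec by (auto intro: finite_subset)
  have finT: "finite ?T" using finite_vecs by auto
  have "?m ` ?S \<subseteq> ?T" using mu_vecs rk_mu rkm by auto
  then have "card ?S = (\<Sum>e\<in>?T. card {p\<in>?S. ?m p = e})" by (rule fiber_sum[OF finS finT])
  also have "\<dots> = (\<Sum>e\<in>?T. q - 1)"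
  proof (rule sum.cong[OF refl])
    fix e assume e: "e \<in> ?T"
    have "\<exists>j<n. e j \<noteq> 0"
    proof (rule ccontr)
      assume "\<not> (\<exists>j<n. e j \<noteq> 0)"
      then have "rk F n (\<lambda>i. z i + e i) = rk F n z" by (intro rk_cong) auto
      then show False using e nR by simp
    qed
    then obtain j where j: "j < n" "e j \<noteq> 0" by blast
    obtain v0 where v0: "v0 \<in> Fvec n" "e = mu n (e j) v0" using rank1_form[of e n j] e j by auto
    have "e j = e j * v0 j" using j(1) fun_cong[OF v0(2), of j] by (simp add: mu_def)
    then have v0j: "v0 j \<noteq> 0" using j(2) by auto
    have "{p\<in>?S. ?m p = e} = {p \<in> UNIV \<times> Fvec n. ?m p = mu n (e j) v0}"
      using e v0(2) rkm by auto
    also have "card \<dots> = q - 1" by (rule fiber_count[OF j(2) v0(1) j(1) v0j])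
    finally show "card {p\<in>?S. ?m p = e} = q - 1" .
  qed
  also have "\<dots> = (q - 1) * card ?T" by simp
  finally show ?thesis .
qed

lemma a_count:
  assumes Q: "card (UNIV :: 'k set) = Qc"
  shows "(q - 1) * card {e \<in> vecs n. rk F n e \<le> 1 \<and> rk F n (\<lambda>i. z i + e i) = rk F n z + 1}
      = (Qc - q ^ rk F n z) * (q ^ n - q ^ rk F n z)"
proof -
  let ?r = "rk F n z"
  have key: "rk F n (\<lambda>i. z i + l * v i) = ?r + 1 \<longleftrightarrow> l \<notin> spn n z \<and> v \<notin> Kp n z"
    if "v \<in> Fvec n" for l v using rank_upd[OF that, of z l] by auto
  have "{p \<in> UNIV \<times> Fvec n. rk F n (\<lambda>i. z i + fst p * snd p i) = ?r + 1} = (UNIV - spn n z) \<times> (Fvec n - Kp n z)"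
  proof (rule set_eqI)
    fix p :: "'k \<times> (nat \<Rightarrow> 'k)"
    obtain l v where p: "p = (l, v)" by (cases p)
    show "p \<in> {p \<in> UNIV \<times> Fvec n. rk F n (\<lambda>i. z i + fst p * snd p i) = ?r + 1} \<longleftrightarrow> p \<in> (UNIV - spn n z) \<times> (Fvec n - Kp n z)"
      unfolding p using key[of v l] by auto
  qed
  moreover have "card (UNIV - spn n z) = Qc - q ^ ?r"
    using card_Diff_subset[of "spn n z" UNIV] card_spn[of n z] Q by simp
  moreover have "card (Fvec n - Kp n z) = q ^ n - q ^ ?r"
    using card_Diff_subset[of "Kp n z" "Fvec n"] Kp_Fvec finite_Fvec card_Kp_rk card_Fvec
    by (metis finite_subset subsetI)
  ultimately have "card {p \<in> UNIV \<times> Fvec n. rk F n (\<lambda>i. z i + fst p * snd p i) = ?r + 1} = (Qc - q ^ ?r) * (q ^ n - q ^ ?r)"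
    by (simp add: card_cartesian_product)
  moreover have "card {p \<in> UNIV \<times> Fvec n. rk F n (\<lambda>i. z i + fst p * snd p i) = ?r + 1}
      = (q - 1) * card {e \<in> vecs n. rk F n e \<le> 1 \<and> rk F n (\<lambda>i. z i + e i) = ?r + 1}"
    by (rule pair_vec) simp
  ultimately show ?thesis by simp
qed

lemma b_count:
  assumes r: "rk F n z \<ge> 1"
  shows "(q - 1) * card {e \<in> vecs n. rk F n e \<le> 1 \<and> rk F n (\<lambda>i. z i + e i) = rk F n z - 1}
      = (q ^ rk F n z - 1) * q ^ (rk F n z - 1)"
proof -
  let ?r = "rk F n z"
  have key: "rk F n (\<lambda>i. z i + l * v i) = ?r - 1 \<longleftrightarrow> l \<in> spn n z - {0} \<and> v \<in> Kp n z \<and> ell n z v l = -1"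
    if "v \<in> Fvec n" for l v using rank_upd[OF that, of z l] r by auto
  have "{p \<in> UNIV \<times> Fvec n. rk F n (\<lambda>i. z i + fst p * snd p i) = ?r - 1}
      = (SIGMA l:spn n z - {0}. {v \<in> Kp n z. ell n z v l = -1})"
  proof (rule set_eqI)
    fix p :: "'k \<times> (nat \<Rightarrow> 'k)"
    obtain l v where p: "p = (l, v)" by (cases p)
    show "p \<in> {p \<in> UNIV \<times> Fvec n. rk F n (\<lambda>i. z i + fst p * snd p i) = ?r - 1} \<longleftrightarrow> p \<in> (SIGMA l:spn n z - {0}. {v \<in> Kp n z. ell n z v l = -1})"
      unfolding p using key[of v l] Kp_Fvec[of v n z] by auto
  qed
  then have "card {p \<in> UNIV \<times> Fvec n. rk F n (\<lambda>i. z i + fst p * snd p i) = ?r - 1}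
       = (\<Sum>l\<in>spn n z - {0}. q ^ (?r - 1))"
  proof -
    have "card (SIGMA l:spn n z - {0}. {v \<in> Kp n z. ell n z v l = -1}) = (\<Sum>l\<in>spn n z - {0}. card {v \<in> Kp n z. ell n z v l = -1})"
    proof (rule card_SigmaI)
      have "Kp n z \<subseteq> Fvec n" using Kp_Fvec by blast
      then have "finite (Kp n z)" using finite_Fvec finite_subset by blast
      then show "\<forall>a\<in>spn n z - {0}. finite {v \<in> Kp n z. ell n z v a = - 1}" by simp
    qed simp
    also have "\<dots> = (\<Sum>l\<in>spn n z - {0}. q ^ (?r - 1))" by (rule sum.cong) (auto simp: ell_count_rk)
    finally show ?thesis using \<open>_ = (SIGMA l:spn n z - {0}. _)\<close> by simp
  qed
  also have "\<dots> = (q ^ ?r - 1) * q ^ (?r - 1)"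
    using card_spn[of n z] zero_spn[of n z] by (simp add: card_Diff_singleton)
  finally have "card {p \<in> UNIV \<times> Fvec n. rk F n (\<lambda>i. z i + fst p * snd p i) = ?r - 1} = (q ^ ?r - 1) * q ^ (?r - 1)" .
  moreover have "card {p \<in> UNIV \<times> Fvec n. rk F n (\<lambda>i. z i + fst p * snd p i) = ?r - 1}
      = (q - 1) * card {e \<in> vecs n. rk F n e \<le> 1 \<and> rk F n (\<lambda>i. z i + e i) = ?r - 1}"
    by (rule pair_vec) (use r in simp)
  ultimately show ?thesis by simp
qed

end



lemma swap_card:
  assumes "finite A" "finite B"
  shows "(\<Sum>x\<in>A. card {y\<in>B. P x y}) = (\<Sum>y\<in>B. card {x\<in>A. P x y})"
proof -
  have "(\<Sum>x\<in>A. card {y\<in>B. P x y}) = (\<Sum>x\<in>A. \<Sum>y\<in>B. if P x y then 1 else 0)"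
    using assms by (simp add: sum.If_cases Int_def)
  also have "\<dots> = (\<Sum>y\<in>B. \<Sum>x\<in>A. if P x y then 1 else 0)" by (rule sum.swap)
  also have "\<dots> = (\<Sum>y\<in>B. card {x\<in>A. P x y})"
    using assms by (simp add: sum.If_cases Int_def)
  finally show ?thesis .
qed

context rkf begin

lemma transl_card:
  fixes c :: "nat \<Rightarrow> 'k"
  assumes c: "c \<in> vecs n"
  shows "card {y \<in> vecs n. P (restrict (\<lambda>i. y i - c i) {..<n})} = card {x \<in> vecs n. P x}"
proof -
  let ?t = "\<lambda>y. restrict (\<lambda>i. y i - c i) {..<n}"
  have inj: "inj_on ?t (vecs n)"
  proof (rule inj_onI)
    fix y y' assume y: "y \<in> vecs n" "y' \<in> vecs n" and eq: "?t y = ?t y'"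
    show "y = y'"
    proof (rule ext)
      fix i show "y i = y' i"
      proof (cases "i < n")
        case True then show ?thesis using fun_cong[OF eq, of i] by simp
      next
        case False then show ?thesis using y unfolding vecs_def by (simp add: PiE_def extensional_def)
      qed
    qed
  qed
  have "?t ` {y \<in> vecs n. P (?t y)} = {x \<in> vecs n. P x}"
  proof
    show "?t ` {y \<in> vecs n. P (?t y)} \<subseteq> {x \<in> vecs n. P x}"
    proof
      fix x assume "x \<in> ?t ` {y \<in> vecs n. P (?t y)}"
      then obtain y where "x = ?t y" "P (?t y)" by blast
      moreover have "?t y \<in> vecs n" unfolding vecs_def by simp
      ultimately show "x \<in> {x \<in> vecs n. P x}" by simp
    qed
    show "{x \<in> vecs n. P x} \<subseteq> ?t ` {y \<in> vecs n. P (?t y)}"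
    proof
      fix x assume x: "x \<in> {x \<in> vecs n. P x}"
      let ?y = "restrict (\<lambda>i. x i + c i) {..<n}"
      have "?t ?y = x"
      proof (rule ext)
        fix i show "?t ?y i = x i"
          using x unfolding vecs_def by (cases "i < n") (auto simp: PiE_def extensional_def)
      qed
      moreover have "?y \<in> vecs n" unfolding vecs_def by simp
      moreover have "P (?t ?y)" using x \<open>?t ?y = x\<close> by simp
      ultimately have "?y \<in> {y \<in> vecs n. P (?t y)}" by simp
      then have "?t ?y \<in> ?t ` {y \<in> vecs n. P (?t y)}" by (rule imageI)
      then show "x \<in> ?t ` {y \<in> vecs n. P (?t y)}" using \<open>?t ?y = x\<close> by simp
    qed
  qed
  moreover have "inj_on ?t {y \<in> vecs n. P (?t y)}" using inj by (rule inj_on_subset) blast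
  from card_image[OF this] show ?thesis using \<open>?t ` _ = _\<close> by simp
qed

lemma dd_restrict: "dd n y c = rk F n (restrict (\<lambda>i. y i - c i) {..<n})"
  by (rule rk_cong) simp

lemma T1: "(c :: nat \<Rightarrow> 'k) \<in> vecs n \<Longrightarrow> card {y \<in> vecs n. P (dd n y c)} = card {x \<in> vecs n. P (rk F n x)}"
  unfolding dd_restrict by (rule transl_card)

lemma T2:
  fixes z c :: "nat \<Rightarrow> 'k"
  assumes z: "z \<in> vecs n"
  shows "card {y \<in> vecs n. dd n y z \<le> 1 \<and> dd n y c = R}
       = card {e \<in> vecs n. rk F n e \<le> 1 \<and> rk F n (\<lambda>i. (z i - c i) + e i) = R}"
proof -
  have "dd n y c = rk F n (\<lambda>i. (z i - c i) + restrict (\<lambda>i. y i - z i) {..<n} i)" for y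
    by (rule rk_cong) simp
  then have "card {y \<in> vecs n. dd n y z \<le> 1 \<and> dd n y c = R} =
     card {y \<in> vecs n. (\<lambda>e. rk F n e \<le> 1 \<and> rk F n (\<lambda>i. (z i - c i) + e i) = R) (restrict (\<lambda>i. y i - z i) {..<n})}"
    unfolding dd_restrict[of n _ z] by simp
  also have "\<dots> = card {e \<in> vecs n. rk F n e \<le> 1 \<and> rk F n (\<lambda>i. (z i - c i) + e i) = R}"
    by (rule transl_card[OF z])
  finally show ?thesis .
qed

lemma ball_count:
  assumes Q: "card (UNIV :: 'k set) = q ^ m"
  shows "card {x \<in> (vecs n :: (nat \<Rightarrow> 'k) set). rk F n x \<le> R} = V_R q m n R"
proof (induction R)
  case 0
  have "{x \<in> (vecs n :: (nat \<Rightarrow> 'k) set). rk F n x \<le> 0} = {x \<in> vecs n. rk F n x = 0}" by auto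
  then show ?case using N_count[OF Q, of n 0] gbinom_G[OF q2] by (simp add: V_R_def N_R_def)
next
  case (Suc R)
  have "{x \<in> (vecs n :: (nat \<Rightarrow> 'k) set). rk F n x \<le> Suc R} = {x \<in> vecs n. rk F n x \<le> R} \<union> {x \<in> vecs n. rk F n x = Suc R}"
    by auto
  moreover have "card ({x \<in> (vecs n :: (nat \<Rightarrow> 'k) set). rk F n x \<le> R} \<union> {x \<in> vecs n. rk F n x = Suc R})
     = card {x \<in> (vecs n :: (nat \<Rightarrow> 'k) set). rk F n x \<le> R} + card {x \<in> (vecs n :: (nat \<Rightarrow> 'k) set). rk F n x = Suc R}"
    by (rule card_Un_disjoint) (auto intro: finite_subset[OF _ finite_vecs])
  ultimately show ?case using Suc N_count[OF Q, of n "Suc R"] gbinom_G[OF q2]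
    by (simp add: V_R_def N_R_def)
qed

lemma sphere_count:
  assumes Q: "card (UNIV :: 'k set) = q ^ m"
  shows "card {x \<in> (vecs n :: (nat \<Rightarrow> 'k) set). rk F n x = R} = N_R q m n R"
  using N_count[OF Q, of n R] gbinom_G[OF q2] by (simp add: N_R_def)

end



lemma G_mono: "q \<ge> 1 \<Longrightarrow> k \<le> n \<Longrightarrow> G q k 1 \<le> G q n 1"
proof (induction n)
  case 0 then show ?case by simp
next
  case (Suc n)
  show ?case
  proof (cases "k = Suc n")
    case True then show ?thesis by simp
  next
    case False
    then have "G q k 1 \<le> G q n 1" using Suc by simp
    also have "G q n 1 \<le> G q (Suc n) 1"
    proof -
      have a: "G q n 1 \<le> q * G q n 1" using Suc.prems(1) by simp
      have b: "G q (Suc n) 1 = q * G q n 1 + 1" by (simp add: numeral_eq_Suc)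
      show ?thesis using a b by linarith
    qed
    finally show ?thesis .
  qed
qed

context rkf begin

lemma g_real: "real (gbinom q k 1) * (real q - 1) = real q ^ k - 1"
proof -
  have "gbinom q k 1 * (q - 1) = q ^ k - 1" using G_1[of q k] gbinom_G[OF q2] by simp
  then have "real (gbinom q k 1 * (q - 1)) = real (q ^ k - 1)" by simp
  moreover have "q \<ge> 1" using q2 by simp
  moreover have "q ^ k \<ge> 1" using q2 by simp
  ultimately show ?thesis by (simp add: of_nat_diff)
qed

lemma qm1_pos: "real q - 1 > 0" using q2 by simp

lemma aval:
  assumes Q: "card (UNIV::'k set) = q ^ m" and r: "rk F n w = r" "r \<le> m" "r \<le> n"
  shows "real (card {e \<in> vecs n. rk F n e \<le> 1 \<and> rk F n (\<lambda>i. w i + e i) = r + 1})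
     = (real q ^ m - real q ^ r) * (real (gbinom q n 1) - real (gbinom q r 1))"
proof -
  let ?N = "card {e \<in> vecs n. rk F n e \<le> 1 \<and> rk F n (\<lambda>i. w i + e i) = r + 1}"
  have h: "(q - 1) * ?N = (q ^ m - q ^ r) * (q ^ n - q ^ r)" using a_count[OF Q, of n w] r by simp
  have le1: "q ^ r \<le> q ^ m" "q ^ r \<le> q ^ n" "1 \<le> q" using q2 r by (auto intro: power_increasing)
  have "real ((q - 1) * ?N) = real ((q ^ m - q ^ r) * (q ^ n - q ^ r))" using h by simp
  then have "(real q - 1) * real ?N = (real q ^ m - real q ^ r) * (real q ^ n - real q ^ r)"
    using le1 by (simp add: of_nat_diff)
  also have "real q ^ n - real q ^ r = (real q ^ n - 1) - (real q ^ r - 1)" by simp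
  also have "\<dots> = (real q - 1) * (real (gbinom q n 1) - real (gbinom q r 1))"
    unfolding g_real[symmetric] by (simp add: algebra_simps)
  finally have "(real q - 1) * real ?N = (real q - 1) * ((real q ^ m - real q ^ r) * (real (gbinom q n 1) - real (gbinom q r 1)))"
    by (simp add: algebra_simps)
  then show ?thesis using qm1_pos by simp
qed

lemma bval:
  assumes r: "rk F n w = r" "1 \<le> r"
  shows "real (card {e \<in> vecs n. rk F n e \<le> 1 \<and> rk F n (\<lambda>i. w i + e i) = r - 1})
     = real q ^ (r - 1) * real (gbinom q r 1)"
proof -
  let ?N = "card {e \<in> vecs n. rk F n e \<le> 1 \<and> rk F n (\<lambda>i. w i + e i) = r - 1}"
  have h: "(q - 1) * ?N = (q ^ r - 1) * q ^ (r - 1)" using b_count[of n w] r by simp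
  have le1: "1 \<le> q ^ r" "1 \<le> q" using q2 by auto
  have "real ((q - 1) * ?N) = real ((q ^ r - 1) * q ^ (r - 1))" using h by simp
  then have "(real q - 1) * real ?N = (real q ^ r - 1) * real q ^ (r - 1)"
    using le1 by (simp add: of_nat_diff)
  also have "\<dots> = (real q - 1) * (real q ^ (r - 1) * real (gbinom q r 1))"
    unfolding g_real[symmetric] by (simp add: algebra_simps)
  finally show ?thesis using qm1_pos by simp
qed

lemma V1_val: "real (V_R q m n 1) = 1 + real (gbinom q n 1) * (real q ^ m - 1)"
proof -
  have "V_R q m n 1 = N_R q m n 0 + N_R q m n 1" unfolding V_R_def by simp
  moreover have "N_R q m n 0 = 1" unfolding N_R_def using gbinom_G[OF q2] by (simp add: alpha_def)
  moreover have "N_R q m n 1 = gbinom q n 1 * (q ^ m - 1)" unfolding N_R_def alpha_def by simp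
  moreover have "1 \<le> q ^ m" using q2 by simp
  ultimately show ?thesis by (simp add: of_nat_diff)
qed

end



context rkf begin

context
  fixes m n \<rho> :: nat and C :: "(nat \<Rightarrow> 'k) set"
  assumes Q: "card (UNIV :: 'k set) = q ^ m" and nm: "n \<le> m" and rho: "0 < \<rho>" "\<rho> < n"
    and CV: "C \<subseteq> vecs n" and cover: "\<forall>x\<in>vecs n. \<exists>c\<in>C. dd n x c \<le> \<rho>"
begin

definition "cov x = card {c \<in> C. dd n x c \<le> \<rho>}"
definition "Zs = {z \<in> vecs n. cov z = 1 \<and> (\<exists>c\<in>C. dd n z c = \<rho>)}"
definition "Dr = real (V_R q m n 1) - real q ^ (\<rho> - 1) * real (gbinom q \<rho> 1) - 1"
definition "Ar = (real q ^ m - real q ^ \<rho>) * (real (gbinom q n 1) - real (gbinom q \<rho> 1))"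
definition "Br = real q ^ \<rho> * real (gbinom q (\<rho> + 1) 1)"

lemma finC: "finite C" using CV finite_vecs finite_subset by blast

lemma cov_ge1: "x \<in> vecs n \<Longrightarrow> cov x \<ge> 1"
proof -
  assume x: "x \<in> vecs n"
  then obtain c where "c \<in> C" "dd n x c \<le> \<rho>" using cover by blast
  then have "{c \<in> C. dd n x c \<le> \<rho>} \<noteq> {}" by blast
  then show ?thesis unfolding cov_def using finC by (simp add: Suc_leI card_gt_0_iff)
qed

lemma Br_pos: "Br > 0"
proof -
  have "real (gbinom q (\<rho> + 1) 1) * (real q - 1) = real q ^ (\<rho> + 1) - 1" by (rule g_real)
  moreover have "real q ^ (\<rho> + 1) > 1" using q2 by (intro one_less_power) auto
  ultimately have "real (gbinom q (\<rho> + 1) 1) > 0" using qm1_pos by (metis diff_gt_0_iff_gt zero_less_mult_pos2)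
  then show ?thesis unfolding Br_def using q2 by simp
qed

lemma eps_eq: "eps8 q m n \<rho> = real_of_int \<lceil>Ar / Br\<rceil> * Br - Ar"
  unfolding eps8_def Ar_def Br_def by (simp add: algebra_simps)

lemma Dr_nonneg: "Dr \<ge> 0"
proof -
  have g: "real (gbinom q \<rho> 1) \<le> real (gbinom q n 1)"
    using G_mono[of q \<rho> n] rho q2 gbinom_G[OF q2] by simp
  have "q ^ (\<rho> - 1) * 2 \<le> q ^ (\<rho> - 1) * q" using q2 by simp
  also have "\<dots> = q ^ \<rho>" using rho by (cases \<rho>) auto
  also have "\<dots> \<le> q ^ m" using rho nm q2 by (intro power_increasing) auto
  finally have "q ^ (\<rho> - 1) * 2 \<le> q ^ m" .
  then have "real (q ^ (\<rho> - 1) * 2) \<le> real (q ^ m)" by (simp only: of_nat_le_iff)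
  then have h2: "real q ^ (\<rho> - 1) * 2 \<le> real q ^ m" by simp
  have "1 \<le> real q ^ (\<rho> - 1)" using q2 by simp
  then have "real q ^ (\<rho> - 1) + 1 \<le> real q ^ m" using h2 by linarith
  then have "real q ^ (\<rho> - 1) \<le> real q ^ m - 1" by simp
  have "real q ^ (\<rho> - 1) * real (gbinom q \<rho> 1) \<le> (real q ^ m - 1) * real (gbinom q n 1)"
    by (rule mult_mono) (use g \<open>real q ^ (\<rho> - 1) \<le> real q ^ m - 1\<close> \<open>1 \<le> real q ^ (\<rho> - 1)\<close> in auto)
  then show ?thesis unfolding Dr_def V1_val by (simp add: algebra_simps)
qed


lemma sumcov: "(\<Sum>x\<in>vecs n. cov x) = card C * V_R q m n \<rho>"
proof -
  have "(\<Sum>x\<in>vecs n. cov x) = (\<Sum>x\<in>vecs n. card {c \<in> C. dd n x c \<le> \<rho>})" unfolding cov_def ..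
  also have "\<dots> = (\<Sum>c\<in>C. card {x \<in> vecs n. dd n x c \<le> \<rho>})" by (rule swap_card[OF finite_vecs finC])
  also have "\<dots> = (\<Sum>c\<in>C. V_R q m n \<rho>)"
  proof (rule sum.cong[OF refl])
    fix c assume "c \<in> C"
    then have c: "c \<in> vecs n" using CV by blast
    show "card {x \<in> vecs n. dd n x c \<le> \<rho>} = V_R q m n \<rho>"
      using T1[OF c, of "\<lambda>d. d \<le> \<rho>"] ball_count[OF Q] by simp
  qed
  finally show ?thesis by simp
qed

lemma Etot_eq: "(\<Sum>x\<in>vecs n. real (cov x) - 1) = real (card C) * real (V_R q m n \<rho>) - real q ^ (m * n)"
proof -
  have "(\<Sum>x\<in>vecs n. real (cov x) - 1) = real (\<Sum>x\<in>vecs n. cov x) - real (card (vecs n :: (nat \<Rightarrow> 'k) set))"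
    by (simp add: sum_subtractf)
  also have "\<dots> = real (card C) * real (V_R q m n \<rho>) - real q ^ (m * n)"
    using sumcov card_vecs[of n] Q by (simp add: power_mult)
  finally show ?thesis .
qed

lemma stepB: "real (card C) * real (N_R q m n \<rho>) \<le> real (card Zs) + 2 * (\<Sum>x\<in>vecs n. real (cov x) - 1)"
proof -
  have "card C * N_R q m n \<rho> = (\<Sum>c\<in>C. card {x \<in> vecs n. dd n x c = \<rho>})"
  proof -
    have "(\<Sum>c\<in>C. card {x \<in> vecs n. dd n x c = \<rho>}) = (\<Sum>c\<in>C. N_R q m n \<rho>)"
    proof (rule sum.cong[OF refl])
      fix c assume "c \<in> C"
      then have c: "c \<in> vecs n" using CV by blast
      show "card {x \<in> vecs n. dd n x c = \<rho>} = N_R q m n \<rho>"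
        using T1[OF c, of "\<lambda>d. d = \<rho>"] sphere_count[OF Q] by simp
    qed
    then show ?thesis by simp
  qed
  also have "\<dots> = (\<Sum>x\<in>vecs n. card {c \<in> C. dd n x c = \<rho>})" by (rule swap_card[OF finC finite_vecs, where P="\<lambda>c x. dd n x c = \<rho>"])
  finally have "real (card C * N_R q m n \<rho>) = (\<Sum>x\<in>vecs n. real (card {c \<in> C. dd n x c = \<rho>}))" by simp
  also have "\<dots> \<le> (\<Sum>x\<in>vecs n. (if x \<in> Zs then 1 else 0) + 2 * (real (cov x) - 1))"
  proof (rule sum_mono)
    fix x :: "nat \<Rightarrow> 'k" assume x: "x \<in> vecs n"
    have sub: "card {c \<in> C. dd n x c = \<rho>} \<le> cov x" unfolding cov_def
      by (rule card_mono) (use finC in auto)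
    show "real (card {c \<in> C. dd n x c = \<rho>}) \<le> (if x \<in> Zs then 1 else 0) + 2 * (real (cov x) - 1)"
    proof (cases "cov x = 1")
      case True
      show ?thesis
      proof (cases "card {c \<in> C. dd n x c = \<rho>} = 0")
        case True then show ?thesis using cov_ge1[OF x] by simp
      next
        case False
        then have "{c \<in> C. dd n x c = \<rho>} \<noteq> {}" by (metis card.empty)
        then have "x \<in> Zs" unfolding Zs_def using x \<open>cov x = 1\<close> by blast
        then show ?thesis using sub True by simp
      qed
    next
      case False
      then have "cov x \<ge> 2" using cov_ge1[OF x] by simp
      then show ?thesis using sub by simp
    qed
  qed
  also have "\<dots> = real (card Zs) + 2 * (\<Sum>x\<in>vecs n. real (cov x) - 1)"
  proof -
    have "(\<Sum>x\<in>vecs n. (if x \<in> Zs then 1 else 0) :: real) = real (card (vecs n \<inter> Zs))"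
      using finite_vecs by (simp add: sum.If_cases)
    moreover have "vecs n \<inter> Zs = Zs" unfolding Zs_def by blast
    ultimately show ?thesis by (simp add: sum.distrib sum_distrib_left)
  qed
  finally show ?thesis by simp
qed


lemma stepC:
  assumes zZ: "z \<in> Zs"
  shows "eps8 q m n \<rho> \<le> (\<Sum>y\<in>vecs n. if dd n y z \<le> 1 then real (cov y) - 1 else 0)"
proof -
  have zV: "z \<in> vecs n" and cz: "cov z = 1" using zZ unfolding Zs_def by auto
  obtain c0 where c0: "c0 \<in> C" "dd n z c0 = \<rho>" using zZ unfolding Zs_def by blast
  have c0V: "c0 \<in> vecs n" using c0 CV by blast
  have uniq: "c = c0" if "c \<in> C" "dd n z c \<le> \<rho>" for c
  proof -
    have "card {c \<in> C. dd n z c \<le> \<rho>} = 1" using cz unfolding cov_def .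
    then obtain a where a: "{c \<in> C. dd n z c \<le> \<rho>} = {a}" using card_1_singletonE by blast
    have "c0 \<in> {c \<in> C. dd n z c \<le> \<rho>}" "c \<in> {c \<in> C. dd n z c \<le> \<rho>}" using c0 that by auto
    then show ?thesis using a by simp
  qed
  define B1 where "B1 = {y \<in> vecs n. dd n y z \<le> 1}"
  have finB1: "finite B1" unfolding B1_def using finite_vecs by simp
  define K where "K c = card {y \<in> B1. dd n y c \<le> \<rho>}" for c
  have V1: "card B1 = V_R q m n 1"
    unfolding B1_def using T1[OF zV, of "\<lambda>d. d \<le> 1"] ball_count[OF Q] by simp
  have "(\<Sum>y\<in>vecs n. if dd n y z \<le> 1 then real (cov y) - 1 else 0) = (\<Sum>y\<in>B1. real (cov y) - 1)"
    unfolding B1_def by (rule sum.inter_filter[OF finite_vecs, symmetric])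
  also have "\<dots> = real (\<Sum>y\<in>B1. cov y) - real (card B1)" by (simp add: sum_subtractf)
  also have "(\<Sum>y\<in>B1. cov y) = (\<Sum>c\<in>C. K c)"
    unfolding cov_def K_def by (rule swap_card[OF finB1 finC])
  also have "\<dots> = K c0 + (\<Sum>c\<in>C - {c0}. K c)" using finC c0(1) by (simp add: sum.remove)
  finally have tot: "(\<Sum>y\<in>vecs n. if dd n y z \<le> 1 then real (cov y) - 1 else 0)
      = real (K c0) + real (\<Sum>c\<in>C - {c0}. K c) - real (V_R q m n 1)" using V1 by simp
  define Aset where "Aset = {y \<in> B1. dd n y c0 = \<rho> + 1}"
  have Aval: "real (card Aset) = Ar"
  proof -
    have "card Aset = card {y \<in> vecs n. dd n y z \<le> 1 \<and> dd n y c0 = \<rho> + 1}"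
      unfolding Aset_def B1_def by (rule arg_cong[where f=card]) blast
    also have "\<dots> = card {e \<in> vecs n. rk F n e \<le> 1 \<and> rk F n (\<lambda>i. (z i - c0 i) + e i) = \<rho> + 1}"
      by (rule T2[OF zV])
    finally have "card Aset = card {e \<in> vecs n. rk F n e \<le> 1 \<and> rk F n (\<lambda>i. (z i - c0 i) + e i) = \<rho> + 1}" .
    then show ?thesis unfolding Ar_def using aval[OF Q, of n "\<lambda>i. z i - c0 i" \<rho>] c0(2) rho nm by simp
  qed
  have Kc0: "K c0 + card Aset = card B1"
  proof -
    have "B1 = {y \<in> B1. dd n y c0 \<le> \<rho>} \<union> Aset"
    proof -
      have "dd n y c0 \<le> \<rho> + 1" if "y \<in> B1" for y
        using dd_tri[of n y c0 z] that c0(2) unfolding B1_def by simp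
      then show ?thesis unfolding Aset_def by fastforce
    qed
    moreover have "{y \<in> B1. dd n y c0 \<le> \<rho>} \<inter> Aset = {}" unfolding Aset_def by auto
    ultimately have "card B1 = card {y \<in> B1. dd n y c0 \<le> \<rho>} + card Aset"
      using finB1 by (metis (no_types, lifting) card_Un_disjoint finite_Un)
    then show ?thesis unfolding K_def by simp
  qed
  define C' where "C' = {c \<in> C - {c0}. K c > 0}"
  have finC': "finite C'" unfolding C'_def using finC by simp
  have Kval: "real (K c) = Br" if "c \<in> C'" for c
  proof -
    have c: "c \<in> C" "c \<noteq> c0" "K c > 0" using that unfolding C'_def by auto
    have cV: "c \<in> vecs n" using c CV by blast
    obtain y where y: "y \<in> B1" "dd n y c \<le> \<rho>" using c(3) unfolding K_def
      by (metis (mono_tags, lifting) Collect_empty_eq card.empty less_irrefl)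
    have "dd n z c \<le> \<rho> + 1" using dd_tri[of n z c y] dd_sym[of n z y] y unfolding B1_def by simp
    moreover have "\<not> dd n z c \<le> \<rho>" using uniq c by blast
    ultimately have dzc: "dd n z c = \<rho> + 1" by simp
    have "{y \<in> B1. dd n y c \<le> \<rho>} = {y \<in> vecs n. dd n y z \<le> 1 \<and> dd n y c = (\<rho> + 1) - 1}"
    proof -
      have "dd n y c \<ge> \<rho>" if "y \<in> B1" for y
        using dd_tri[of n z c y] dd_sym[of n z y] that dzc unfolding B1_def by simp
      then show ?thesis unfolding B1_def by fastforce
    qed
    then have "K c = card {e \<in> vecs n. rk F n e \<le> 1 \<and> rk F n (\<lambda>i. (z i - c i) + e i) = (\<rho> + 1) - 1}"
      unfolding K_def using T2[OF zV, of c "(\<rho> + 1) - 1"] by simp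
    then show ?thesis unfolding Br_def using bval[of n "\<lambda>i. z i - c i" "\<rho> + 1"] dzc by simp
  qed
  have sumC: "(\<Sum>c\<in>C - {c0}. K c) = (\<Sum>c\<in>C'. K c)"
    unfolding C'_def by (rule sum.mono_neutral_right) (use finC in auto)
  have "real (\<Sum>c\<in>C'. K c) = (\<Sum>c\<in>C'. Br)" using Kval by simp
  then have sumC': "real (\<Sum>c\<in>C - {c0}. K c) = real (card C') * Br" using sumC by simp
  have cover_A: "card Aset \<le> (\<Sum>c\<in>C'. K c)"
  proof -
    have "Aset \<subseteq> (\<Union>c\<in>C'. {y \<in> B1. dd n y c \<le> \<rho>})"
    proof
      fix y assume y: "y \<in> Aset"
      then have yV: "y \<in> vecs n" unfolding Aset_def B1_def by simp
      obtain c where c: "c \<in> C" "dd n y c \<le> \<rho>" using cover yV by blast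
      have "c \<noteq> c0" using c y unfolding Aset_def by auto
      moreover have "K c > 0"
      proof -
        have "y \<in> {y \<in> B1. dd n y c \<le> \<rho>}" using y c unfolding Aset_def by simp
        then show ?thesis unfolding K_def using finB1 card_gt_0_iff by fastforce
      qed
      ultimately have "c \<in> C'" unfolding C'_def using c by simp
      then show "y \<in> (\<Union>c\<in>C'. {y \<in> B1. dd n y c \<le> \<rho>})" using y c unfolding Aset_def by blast
    qed
    then have "card Aset \<le> card (\<Union>c\<in>C'. {y \<in> B1. dd n y c \<le> \<rho>})"
      by (rule card_mono[rotated]) (use finB1 finC' in auto)
    also have "\<dots> \<le> (\<Sum>c\<in>C'. K c)" unfolding K_def by (rule card_UN_le[OF finC'])
    finally show ?thesis .
  qed
  have AB: "Ar \<le> real (card C') * Br"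
    using cover_A Aval sumC sumC' by (metis of_nat_le_iff)
  have "Ar / Br \<le> real (card C')" using AB Br_pos by (simp add: divide_le_eq)
  then have "\<lceil>Ar / Br\<rceil> \<le> int (card C')" by (simp add: ceiling_le_iff)
  then have "real_of_int \<lceil>Ar / Br\<rceil> \<le> real (card C')" by linarith
  then have "real_of_int \<lceil>Ar / Br\<rceil> * Br \<le> real (card C') * Br" using Br_pos by (simp add: mult_right_mono)
  then have "eps8 q m n \<rho> \<le> real (card C') * Br - Ar" unfolding eps_eq by simp
  also have "\<dots> = real (K c0) + real (\<Sum>c\<in>C - {c0}. K c) - real (V_R q m n 1)"
    using sumC' Kc0 V1 Aval by (simp add: of_nat_add[symmetric] algebra_simps)
  finally show ?thesis using tot by simp
qed


lemma stepD:
  assumes yV: "y \<in> vecs n" and cy: "cov y \<ge> 2"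
  shows "real (card {z \<in> Zs. dd n y z \<le> 1}) \<le> Dr"
proof (cases "\<exists>c\<in>C. dd n y c = \<rho>")
  case True
  then obtain c where c: "c \<in> C" "dd n y c = \<rho>" by blast
  define B1 where "B1 = {z \<in> vecs n. dd n z y \<le> 1}"
  define T where "T = {z \<in> vecs n. dd n z y \<le> 1 \<and> dd n z c = \<rho> - 1}"
  have finB1: "finite B1" unfolding B1_def using finite_vecs by simp
  have V1: "card B1 = V_R q m n 1"
    unfolding B1_def using T1[OF yV, of "\<lambda>d. d \<le> 1"] ball_count[OF Q] by simp
  have Tval: "real (card T) = real q ^ (\<rho> - 1) * real (gbinom q \<rho> 1)"
  proof -
    have "card T = card {e \<in> vecs n. rk F n e \<le> 1 \<and> rk F n (\<lambda>i. (y i - c i) + e i) = \<rho> - 1}"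
      unfolding T_def by (rule T2[OF yV])
    then show ?thesis using bval[of n "\<lambda>i. y i - c i" \<rho>] c(2) rho by simp
  qed
  have yT: "y \<notin> T" using c(2) rho unfolding T_def by auto
  have sub: "{z \<in> Zs. dd n y z \<le> 1} \<subseteq> B1 - insert y T"
  proof
    fix z assume z: "z \<in> {z \<in> Zs. dd n y z \<le> 1}"
    then have zZ: "z \<in> Zs" and zy: "dd n z y \<le> 1" using dd_sym[of n y z] by auto
    have zV: "z \<in> vecs n" and cz: "cov z = 1" using zZ unfolding Zs_def by auto
    have "z \<noteq> y" using cz cy by auto
    moreover have "z \<notin> T"
    proof
      assume "z \<in> T"
      then have d: "dd n z c = \<rho> - 1" unfolding T_def by simp
      obtain c0 where c0: "c0 \<in> C" "dd n z c0 = \<rho>" using zZ unfolding Zs_def by blast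
      have "card {c \<in> C. dd n z c \<le> \<rho>} = 1" using cz unfolding cov_def .
      then obtain a where a: "{c \<in> C. dd n z c \<le> \<rho>} = {a}" using card_1_singletonE by blast
      have "c0 \<in> {c \<in> C. dd n z c \<le> \<rho>}" "c \<in> {c \<in> C. dd n z c \<le> \<rho>}" using c0 c(1) d by auto
      then have "c = c0" using a by simp
      then show False using d c0(2) rho by simp
    qed
    ultimately show "z \<in> B1 - insert y T" unfolding B1_def using zV zy by simp
  qed
  have "T \<subseteq> B1" unfolding B1_def T_def by blast
  moreover have "y \<in> B1" unfolding B1_def using yV dd_self[of n y] by simp
  ultimately have "insert y T \<subseteq> B1" by blast
  moreover have "finite (insert y T)" using \<open>insert y T \<subseteq> B1\<close> finB1 by (rule finite_subset)
  ultimately have "card (B1 - insert y T) = card B1 - card (insert y T)" by (rule card_Diff_subset[rotated])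
  moreover have "card (insert y T) = card T + 1"
  proof -
    have "finite T" using \<open>T \<subseteq> B1\<close> finB1 by (rule finite_subset)
    then show ?thesis using yT by simp
  qed
  moreover have "card (insert y T) \<le> card B1" using \<open>insert y T \<subseteq> B1\<close> finB1 by (rule card_mono[rotated])
  moreover have "card {z \<in> Zs. dd n y z \<le> 1} \<le> card (B1 - insert y T)" using sub finB1 by (intro card_mono) auto
  ultimately have "card {z \<in> Zs. dd n y z \<le> 1} + card T + 1 \<le> card B1" by linarith
  then have "real (card {z \<in> Zs. dd n y z \<le> 1} + card T + 1) \<le> real (card B1)" by (simp only: of_nat_le_iff)
  then have "real (card {z \<in> Zs. dd n y z \<le> 1}) \<le> real (card B1) - real (card T) - 1" by simp
  then show ?thesis unfolding Dr_def using V1 Tval by simp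
next
  case False
  have "{z \<in> Zs. dd n y z \<le> 1} = {}"
  proof (rule ccontr)
    assume "{z \<in> Zs. dd n y z \<le> 1} \<noteq> {}"
    then obtain z where zZ: "z \<in> Zs" and zy: "dd n z y \<le> 1" using dd_sym[of n y] by auto
    have cz: "cov z = 1" using zZ unfolding Zs_def by auto
    let ?S = "{c \<in> C. dd n y c \<le> \<rho>}"
    have finS: "finite ?S" using finC by simp
    have "?S \<noteq> {}" using cy unfolding cov_def by (intro notI) simp
    then obtain c1 where c1: "c1 \<in> ?S" by blast
    have "card (?S - {c1}) \<ge> 1" using cy c1 finS unfolding cov_def by (simp add: card_Diff_singleton)
    then have "?S - {c1} \<noteq> {}" by (intro notI) simp
    then obtain c2 where c2: "c2 \<in> ?S - {c1}" by blast
    have close: "dd n z c \<le> \<rho>" if "c \<in> ?S" for c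
    proof -
      have "dd n y c \<le> \<rho>" "dd n y c \<noteq> \<rho>" using that False by auto
      then have "dd n y c \<le> \<rho> - 1" by simp
      then show ?thesis using dd_tri[of n z c y] zy rho by simp
    qed
    have "{c1, c2} \<subseteq> {c \<in> C. dd n z c \<le> \<rho>}" using c1 c2 close by auto
    then have "card {c1, c2} \<le> cov z" unfolding cov_def by (rule card_mono[rotated]) (use finC in simp)
    moreover have "card {c1, c2} = 2" using c2 by auto
    ultimately show False using cz by simp
  qed
  then have "card {z \<in> Zs. dd n y z \<le> 1} = 0" by (simp only: card.empty)
  then show ?thesis using Dr_nonneg by simp
qed


lemma final_ineq:
  assumes epos: "eps8 q m n \<rho> > 0"
  shows "real q ^ (m * n) \<le> real (card C) * (real (V_R q m n \<rho>) - eps8 q m n \<rho> / delta8 q m n \<rho> * real (N_R q m n \<rho>))"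
proof -
  define E where "E = (\<Sum>x\<in>vecs n. real (cov x) - 1)"
  define \<epsilon> where "\<epsilon> = eps8 q m n \<rho>"
  have finZ: "finite Zs" unfolding Zs_def using finite_vecs by simp
  have ZV: "Zs \<subseteq> vecs n" unfolding Zs_def by blast
  have "\<epsilon> * real (card Zs) = (\<Sum>z\<in>Zs. \<epsilon>)" by simp
  also have "\<dots> \<le> (\<Sum>z\<in>Zs. \<Sum>y\<in>vecs n. if dd n y z \<le> 1 then real (cov y) - 1 else 0)"
    unfolding \<epsilon>_def by (rule sum_mono) (rule stepC)
  also have "\<dots> = (\<Sum>y\<in>vecs n. \<Sum>z\<in>Zs. if dd n y z \<le> 1 then real (cov y) - 1 else 0)"
    by (rule sum.swap)
  also have "\<dots> = (\<Sum>y\<in>vecs n. (real (cov y) - 1) * real (card {z \<in> Zs. dd n y z \<le> 1}))"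
  proof (rule sum.cong[OF refl])
    fix y :: "nat \<Rightarrow> 'k"
    have "(\<Sum>z\<in>Zs. if dd n y z \<le> 1 then real (cov y) - 1 else 0) = (\<Sum>z\<in>{z \<in> Zs. dd n y z \<le> 1}. real (cov y) - 1)"
      by (rule sum.inter_filter[OF finZ, symmetric])
    also have "\<dots> = (real (cov y) - 1) * real (card {z \<in> Zs. dd n y z \<le> 1})" by simp
    finally show "(\<Sum>z\<in>Zs. if dd n y z \<le> 1 then real (cov y) - 1 else 0) = (real (cov y) - 1) * real (card {z \<in> Zs. dd n y z \<le> 1})" .
  qed
  also have "\<dots> \<le> (\<Sum>y\<in>vecs n. (real (cov y) - 1) * Dr)"
  proof (rule sum_mono)
    fix y :: "nat \<Rightarrow> 'k" assume y: "y \<in> vecs n"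
    show "(real (cov y) - 1) * real (card {z \<in> Zs. dd n y z \<le> 1}) \<le> (real (cov y) - 1) * Dr"
    proof (cases "cov y = 1")
      case True then show ?thesis by simp
    next
      case False
      then have "cov y \<ge> 2" using cov_ge1[OF y] by simp
      then show ?thesis using stepD[OF y] by (intro mult_left_mono) auto
    qed
  qed
  also have "\<dots> = Dr * E" unfolding E_def by (simp add: sum_distrib_left mult.commute)
  finally have comb: "\<epsilon> * real (card Zs) \<le> Dr * E" .
  have B: "real (card C) * real (N_R q m n \<rho>) \<le> real (card Zs) + 2 * E" using stepB unfolding E_def .
  have epos': "\<epsilon> > 0" using epos unfolding \<epsilon>_def .
  have del: "delta8 q m n \<rho> = Dr + 2 * \<epsilon>" unfolding delta8_def Dr_def \<epsilon>_def by simp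
  have dpos: "delta8 q m n \<rho> > 0" using del Dr_nonneg epos' by simp
  have "\<epsilon> * (real (card C) * real (N_R q m n \<rho>)) \<le> \<epsilon> * (real (card Zs) + 2 * E)"
    using B epos' by (intro mult_left_mono) auto
  also have "\<dots> \<le> Dr * E + 2 * \<epsilon> * E" using comb by (simp add: algebra_simps)
  also have "\<dots> = delta8 q m n \<rho> * E" using del by (simp add: algebra_simps)
  finally have "\<epsilon> * (real (card C) * real (N_R q m n \<rho>)) \<le> delta8 q m n \<rho> * E" .
  then have key: "\<epsilon> / delta8 q m n \<rho> * (real (card C) * real (N_R q m n \<rho>)) \<le> E"
    using dpos by (simp add: divide_le_eq mult.commute mult.left_commute)
  have "E = real (card C) * real (V_R q m n \<rho>) - real q ^ (m * n)" unfolding E_def by (rule Etot_eq)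
  then show ?thesis using key unfolding \<epsilon>_def by (simp add: algebra_simps)
qed

end
end



context rkf begin

lemma indep_nonzero: "lin_indep_over F y I \<Longrightarrow> finite I \<Longrightarrow> i \<in> I \<Longrightarrow> y i \<noteq> 0"
proof
  assume h: "lin_indep_over F y I" "finite I" "i \<in> I" "y i = 0"
  let ?c = "\<lambda>j. if j = i then (1::'k) else 0"
  have "(\<Sum>j\<in>I. ?c j * y j) = (\<Sum>j\<in>I. if j = i then y j else 0)" by (rule sum.cong) auto
  also have "\<dots> = 0" using h by simp
  finally have s0: "(\<Sum>j\<in>I. ?c j * y j) = 0" .
  have "\<forall>j\<in>I. ?c j \<in> F" using F0 F1 by auto
  from indepD[OF h(1) this s0 h(3)] show False by simp
qed

lemma rk_support:
  assumes "\<And>i. i < n \<Longrightarrow> i \<notin> J \<Longrightarrow> y i = 0"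
  shows "rk F n y \<le> card (J \<inter> {..<n})"
proof -
  obtain I where I: "I \<subseteq> {..<n}" "lin_indep_over F y I" "card I = rk F n y" using rk_obtain by blast
  have fI: "finite I" using I(1) finite_subset by blast
  have "I \<subseteq> J \<inter> {..<n}"
  proof
    fix i assume i: "i \<in> I"
    then have "y i \<noteq> 0" using indep_nonzero[OF I(2) fI] by simp
    then show "i \<in> J \<inter> {..<n}" using assms i I(1) by blast
  qed
  then show ?thesis using I(3) card_mono[of "J \<inter> {..<n}" I] by simp
qed

lemma indep_cong: "lin_indep_over F x I \<Longrightarrow> (\<And>i. i \<in> I \<Longrightarrow> x i = y i) \<Longrightarrow> lin_indep_over F y I"
  unfolding lin_indep_over_def by (metis (no_types, lifting) sum.cong)

lemma exists_indep:
  assumes Q: "card (UNIV :: 'k set) = q ^ m"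
  shows "j \<le> m \<Longrightarrow> \<exists>\<beta> :: nat \<Rightarrow> 'k. lin_indep_over F \<beta> {..<j}"
proof (induction j)
  case 0 then show ?case using indep_empty by auto
next
  case (Suc j)
  then obtain \<beta> :: "nat \<Rightarrow> 'k" where b: "lin_indep_over F \<beta> {..<j}" by auto
  have "card (spanI {..<j} \<beta>) = q ^ j" using card_spanI_indep[OF _ b] by simp
  also have "\<dots> < q ^ m" using Suc.prems q2 by (intro power_strict_increasing) auto
  finally have "spanI {..<j} \<beta> \<noteq> UNIV" using Q by auto
  then obtain b0 where b0: "b0 \<notin> spanI {..<j} \<beta>" by blast
  let ?\<beta> = "\<beta>(j := b0)"
  have "lin_indep_over F ?\<beta> {..<Suc j}"
    unfolding lin_indep_over_def
  proof (intro allI impI)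
    fix c assume cF: "\<forall>i\<in>{..<Suc j}. c i \<in> F" and s0: "(\<Sum>i\<in>{..<Suc j}. c i * ?\<beta> i) = 0"
    have s1: "(\<Sum>i<j. c i * \<beta> i) + c j * b0 = 0"
    proof -
      have "(\<Sum>i<j. c i * ?\<beta> i) = (\<Sum>i<j. c i * \<beta> i)" by (rule sum.cong) auto
      then show ?thesis using s0 by simp
    qed
    have cj: "c j = 0"
    proof (rule ccontr)
      assume cj: "c j \<noteq> 0"
      have "b0 = (\<Sum>i<j. (- c i / c j) * \<beta> i)"
      proof -
        have "(\<Sum>i<j. (- c i / c j) * \<beta> i) = - (\<Sum>i<j. c i * \<beta> i) / c j"
          by (simp add: sum_divide_distrib sum_negf[symmetric])
        also have "(\<Sum>i<j. c i * \<beta> i) = - (c j * b0)" using s1 by (simp add: eq_neg_iff_add_eq_0)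
        finally show ?thesis using cj by simp
      qed
      moreover have "\<forall>i\<in>{..<j}. - c i / c j \<in> F" using cF by (auto intro!: Fdiv Fneg)
      ultimately have "b0 \<in> spanI {..<j} \<beta>" using spanI_memI[of "{..<j}" "\<lambda>i. - c i / c j" \<beta>] by simp
      then show False using b0 by simp
    qed
    then have "(\<Sum>i<j. c i * \<beta> i) = 0" using s1 by simp
    then have "\<forall>i\<in>{..<j}. c i = 0" using indepD[OF b, of c] cF by auto
    then show "\<forall>i\<in>{..<Suc j}. c i = 0" using cj by (auto simp: less_Suc_eq)
  qed
  then show ?case by blast
qed

lemma cov_extract:
  assumes CV: "C \<subseteq> vecs n" and Cne: "C \<noteq> {}" and R: "rank_cov_radius F n C = \<rho>"
  shows "\<forall>x\<in>vecs n. \<exists>c\<in>C. dd n x c \<le> \<rho>"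
proof
  fix x :: "nat \<Rightarrow> 'k" assume x: "x \<in> vecs n"
  have finC: "finite C" using CV finite_vecs finite_subset by blast
  let ?M = "\<lambda>x. Min {rank_dist F n x c | c. c \<in> C}"
  have fin: "finite {?M x | x. x \<in> vecs n}" using finite_vecs by simp
  have "?M x \<le> Max {?M x | x. x \<in> vecs n}" by (rule Max_ge[OF fin]) (use x in blast)
  then have le: "?M x \<le> \<rho>" using R unfolding rank_cov_radius_def by simp
  have "{rank_dist F n x c | c. c \<in> C} = (\<lambda>c. rank_dist F n x c) ` C" by blast
  then have fin2: "finite {rank_dist F n x c | c. c \<in> C}" "{rank_dist F n x c | c. c \<in> C} \<noteq> {}"
    using finC Cne by auto
  from Min_in[OF fin2] obtain c where c: "c \<in> C" "rank_dist F n x c = ?M x" by auto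
  have "rank_dist F n x c \<le> \<rho>" using c(2) le by simp
  then show "\<exists>c\<in>C. dd n x c \<le> \<rho>" using c(1) unfolding rank_dist_def by blast
qed

lemma code_exists:
  assumes Q: "card (UNIV :: 'k set) = q ^ m" and nm: "n \<le> m" and rho: "\<rho> < n"
  shows "\<exists>C. C \<subseteq> vecs n \<and> C \<noteq> {} \<and> rank_cov_radius F n C = \<rho>"
proof -
  define C0 where "C0 = {x \<in> (vecs n :: (nat \<Rightarrow> 'k) set). \<forall>i<\<rho>. x i = 0}"
  have C0V: "C0 \<subseteq> vecs n" unfolding C0_def by blast
  have "restrict (\<lambda>_. 0) {..<n} \<in> C0" using rho unfolding C0_def vecs_def by simp
  then have C0ne: "C0 \<noteq> {}" by blast
  have finC0: "finite C0" using C0V finite_vecs finite_subset by blast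
  have cov: "\<exists>c\<in>C0. dd n x c \<le> \<rho>" if x: "x \<in> vecs n" for x
  proof -
    let ?c = "restrict (\<lambda>i. if i < \<rho> then 0 else x i) {..<n}"
    have "?c \<in> C0" using rho unfolding C0_def vecs_def by simp
    moreover have "dd n x ?c \<le> card ({..<\<rho>} \<inter> {..<n})" by (rule rk_support) auto
    moreover have "card ({..<\<rho>} \<inter> {..<n}) \<le> \<rho>" by (metis card_lessThan card_mono finite_lessThan inf_le1)
    ultimately show ?thesis by force
  qed
  obtain \<beta> :: "nat \<Rightarrow> 'k" where b: "lin_indep_over F \<beta> {..<\<rho>}" using exists_indep[OF Q, of \<rho>] nm rho by auto
  define x0 where "x0 = restrict \<beta> {..<n}"
  have x0V: "x0 \<in> vecs n" unfolding x0_def vecs_def by simp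
  have far: "dd n x0 c \<ge> \<rho>" if c: "c \<in> C0" for c
  proof -
    have "lin_indep_over F (\<lambda>i. x0 i - c i) {..<\<rho>}"
      by (rule indep_cong[OF b]) (use c rho in \<open>auto simp: C0_def x0_def\<close>)
    then have "card {..<\<rho>} \<le> dd n x0 c" by (intro rk_ge) (use rho in auto)
    then show ?thesis by simp
  qed
  let ?M = "\<lambda>x. Min {rank_dist F n x c | c. c \<in> C0}"
  have imgC: "{rank_dist F n x c | c. c \<in> C0} = (\<lambda>c. rank_dist F n x c) ` C0" for x by blast
  have fin2: "finite {rank_dist F n x c | c. c \<in> C0}" "{rank_dist F n x c | c. c \<in> C0} \<noteq> {}" for x
    using finC0 C0ne imgC by auto
  have Mle: "?M x \<le> \<rho>" if xv: "x \<in> vecs n" for x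
  proof -
    obtain c where "c \<in> C0" "dd n x c \<le> \<rho>" using cov[OF xv] by blast
    have "?M x \<le> rank_dist F n x c" by (rule Min_le[OF fin2(1)]) (use \<open>c \<in> C0\<close> in blast)
    then show ?thesis using \<open>dd n x c \<le> \<rho>\<close> unfolding rank_dist_def by simp
  qed
  have Mx0: "?M x0 = \<rho>"
  proof -
    from Min_in[OF fin2(1)[of x0] fin2(2)[of x0]] obtain c where "c \<in> C0" "rank_dist F n x0 c = ?M x0" by auto
    then have "?M x0 \<ge> \<rho>" using far unfolding rank_dist_def by fastforce
    then show ?thesis using Mle[OF x0V] by simp
  qed
  have "rank_cov_radius F n C0 = \<rho>"
    unfolding rank_cov_radius_def
  proof (rule Max_eqI)
    show "finite {?M x | x. x \<in> vecs n}" using finite_vecs by simp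
    show "\<And>y. y \<in> {?M x | x. x \<in> vecs n} \<Longrightarrow> y \<le> \<rho>" using Mle by blast
    show "\<rho> \<in> {?M x | x. x \<in> vecs n}" using Mx0 x0V by force
  qed
  then show ?thesis using C0V C0ne by blast
qed

end

theorem proposition8:
  fixes F :: "'k::{finite,field} set" and q m n \<rho> :: nat
  assumes "is_subfield F" and "card F = q" and "card (UNIV :: 'k set) = q ^ m"
    and "n \<le> m" and "0 < \<rho>" and "\<rho> < n"
    and "eps8 q m n \<rho> > 0"
  shows "real_of_int \<lceil>real q ^ (m * n) /
            (real (V_R q m n \<rho>) - eps8 q m n \<rho> / delta8 q m n \<rho> * real (N_R q m n \<rho>))\<rceil>
         \<le> real (K_R F n \<rho>)"
proof -
  interpret rkf F by unfold_locales (rule assms(1))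
  have Q: "card (UNIV :: 'k set) = card F ^ m" using assms(2,3) by simp
  let ?P = "\<lambda>k. \<exists>C. C \<subseteq> vecs n \<and> C \<noteq> {} \<and> card C = k \<and> rank_cov_radius F n C = \<rho>"
  obtain C0 where "C0 \<subseteq> vecs n \<and> C0 \<noteq> {} \<and> rank_cov_radius F n C0 = \<rho>"
    using code_exists[OF Q assms(4,6)] by blast
  then have "?P (card C0)" by blast
  then have "?P (LEAST k. ?P k)" by (rule LeastI)
  then obtain C where C: "C \<subseteq> vecs n" "C \<noteq> {}" "card C = K_R F n \<rho>" "rank_cov_radius F n C = \<rho>"
    unfolding K_R_def by blast
  have cover: "\<forall>x\<in>vecs n. \<exists>c\<in>C. dd n x c \<le> \<rho>" by (rule cov_extract[OF C(1,2,4)])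
  have ineq: "real (card F) ^ (m * n) \<le> real (card C) * (real (V_R (card F) m n \<rho>) - eps8 (card F) m n \<rho> / delta8 (card F) m n \<rho> * real (N_R (card F) m n \<rho>))"
    using final_ineq[OF Q assms(4,5,6) C(1) cover] assms(7) assms(2) by simp
  define den where "den = real (V_R q m n \<rho>) - eps8 q m n \<rho> / delta8 q m n \<rho> * real (N_R q m n \<rho>)"
  have ineq': "real q ^ (m * n) \<le> real (card C) * den" using ineq assms(2) unfolding den_def by simp
  have qpos: "real q ^ (m * n) > 0" using q2 assms(2) by simp
  have dpos: "den > 0"
  proof (rule ccontr)
    assume "\<not> den > 0"
    then have "real (card C) * den \<le> 0" by (simp add: mult_nonneg_nonpos)
    then show False using ineq' qpos by simp
  qed
  have "real q ^ (m * n) / den \<le> real (card C)" using ineq' dpos by (simp add: divide_le_eq mult.commute)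
  then have "\<lceil>real q ^ (m * n) / den\<rceil> \<le> int (card C)" by (simp add: ceiling_le_iff)
  then show ?thesis using C(3) unfolding den_def by simp
qed


end
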